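(* Let $\alpha,\beta,\theta>0$, set $\gamma=\theta$, and let $X$ be the birth and death process on $\mathbb{Z}$ with birth rates $\alpha+i^-\theta$ and death rates $\beta+i^+\theta$, started at $X(0)=x\in\mathbb{Z}$. Then $$\lim_{t\to\infty}s(t)=\frac{\alpha+\beta}{2\theta}+\frac{(\alpha-\beta)^2}{\theta^2}+\frac{\lim_{t\to\infty}m_+(t)+\lim_{t\to\infty}m_-(t)}{2},$$ and consequently $$\lim_{t\to\infty}s(t)\ \ge\ \Big(\frac{\alpha-\beta}{\theta}\Big)^2+\frac{\max\{\alpha,\beta\}}{\theta}.$$
   Context: $s(t)=\mathbb{E}[(X(t))^2]$, $m_+(t)=\mathbb{E}(X^+(t))$, $m_-(t)=\mathbb{E}(X^-(t))$, with $a^+=\max\{a,0\}$, $a^-=\max\{0,-a\}$; all these limits exist. *)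

theory Defs
  imports "HOL-Analysis.Analysis"
begin

definition pos_part :: "int \<Rightarrow> int" where "pos_part a = max a 0"
definition neg_part :: "int \<Rightarrow> int" where "neg_part a = max 0 (- a)"

text \<open>Birth rate (i to i+1) and death rate (i to i-1) at state i, with gamma = theta.\<close>
definition birth_rate :: "real \<Rightarrow> real \<Rightarrow> int \<Rightarrow> real" where
  "birth_rate \<alpha> \<theta> i = \<alpha> + real_of_int (neg_part i) * \<theta>"
definition death_rate :: "real \<Rightarrow> real \<Rightarrow> int \<Rightarrow> real" where
  "death_rate \<beta> \<theta> i = \<beta> + real_of_int (pos_part i) * \<theta>"

text \<open>p t y = P(X(t) = y): the law of the birth-death process started at x,
  characterised as a probability-distribution-valued solution of the Kolmogorov
  forward equations with initial condition delta_x.\<close>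
definition bd_law :: "real \<Rightarrow> real \<Rightarrow> real \<Rightarrow> int \<Rightarrow> (real \<Rightarrow> int \<Rightarrow> real) \<Rightarrow> bool" where
  "bd_law \<alpha> \<beta> \<theta> x p \<longleftrightarrow>
     (\<forall>y. p 0 y = (if y = x then 1 else 0)) \<and>
     (\<forall>t\<ge>0. \<forall>y. p t y \<ge> 0) \<and>
     (\<forall>t\<ge>0. ((\<lambda>y. p t y) has_sum 1) UNIV) \<and>
     (\<forall>y. continuous_on {0..} (\<lambda>t. p t y)) \<and>
     (\<forall>t>0. \<forall>y. ((\<lambda>s. p s y) has_real_derivative
         (birth_rate \<alpha> \<theta> (y - 1) * p t (y - 1) + death_rate \<beta> \<theta> (y + 1) * p t (y + 1)
          - (birth_rate \<alpha> \<theta> y + death_rate \<beta> \<theta> y) * p t y)) (at t))"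

definition second_moment :: "(real \<Rightarrow> int \<Rightarrow> real) \<Rightarrow> real \<Rightarrow> real" where
  "second_moment p t = (\<Sum>\<^sub>\<infinity>y. real_of_int y ^ 2 * p t y)"
definition mean_pos :: "(real \<Rightarrow> int \<Rightarrow> real) \<Rightarrow> real \<Rightarrow> real" where
  "mean_pos p t = (\<Sum>\<^sub>\<infinity>y. real_of_int (pos_part y) * p t y)"
definition mean_neg :: "(real \<Rightarrow> int \<Rightarrow> real) \<Rightarrow> real \<Rightarrow> real" where
  "mean_neg p t = (\<Sum>\<^sub>\<infinity>y. real_of_int (neg_part y) * p t y)"

end

theory Submission
  imports Defs "HOL-Real_Asymp.Real_Asymp"
begin

lemma summable_on_diff_r:
  fixes f g :: "'a \<Rightarrow> real"
  assumes "f summable_on A" "g summable_on A"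
  shows "(\<lambda>x. f x - g x) summable_on A"
  using summable_on_add[OF assms(1) summable_on_uminus[THEN iffD2, OF assms(2)]] by simp

lemma infsum_diff_r:
  fixes f g :: "'a \<Rightarrow> real"
  assumes "f summable_on A" "g summable_on A"
  shows "(\<Sum>\<^sub>\<infinity>x\<in>A. f x - g x) = infsum f A - infsum g A"
  using infsum_add[OF assms(1) summable_on_uminus[THEN iffD2, OF assms(2)]] infsum_uminus[of g A] by simp

lemma summable_on_sum_r:
  fixes f :: "'i \<Rightarrow> 'a \<Rightarrow> real"
  assumes "finite I" "\<And>i. i \<in> I \<Longrightarrow> f i summable_on A"
  shows "(\<lambda>x. \<Sum>i\<in>I. f i x) summable_on A"
  using assms by (induction I rule: finite_induct) (auto intro: summable_on_add)

lemma infsum_sum_r: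
  fixes f :: "'i \<Rightarrow> 'a \<Rightarrow> real"
  assumes "finite I" "\<And>i. i \<in> I \<Longrightarrow> f i summable_on A"
  shows "(\<Sum>\<^sub>\<infinity>x\<in>A. \<Sum>i\<in>I. f i x) = (\<Sum>i\<in>I. infsum (f i) A)"
  using assms
proof (induction I rule: finite_induct)
  case (insert i I)
  then show ?case
    by (simp add: infsum_add summable_on_sum_r)
qed simp

lemma summable_on_compare_r:
  fixes f g :: "'a \<Rightarrow> real"
  assumes "g summable_on A" "\<And>x. x \<in> A \<Longrightarrow> \<bar>f x\<bar> \<le> g x"
  shows "f summable_on A"
proof -
  have "(\<lambda>x. norm (g x)) summable_on A" using assms(1) summable_on_iff_abs_summable_on_real by blast
  then have "(\<lambda>x. norm (f x)) summable_on A"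
    by (rule Infinite_Sum.abs_summable_on_comparison_test) (use assms(2) in force)
  then show ?thesis using summable_on_iff_abs_summable_on_real by blast
qed

lemma infsum_abs_le_r:
  fixes f g :: "'a \<Rightarrow> real"
  assumes "g summable_on A" "\<And>x. x \<in> A \<Longrightarrow> \<bar>f x\<bar> \<le> g x"
  shows "\<bar>infsum f A\<bar> \<le> infsum g A"
proof -
  have fs: "f summable_on A" using summable_on_compare_r assms by blast
  have "infsum f A \<le> infsum g A" by (rule infsum_mono[OF fs assms(1)]) (use assms(2) in force)
  moreover have "- infsum f A \<le> infsum g A"
    using infsum_mono[OF summable_on_uminus[THEN iffD2, OF fs] assms(1)] assms(2) infsum_uminus[of f A]
    by (smt (verit, best))
  ultimately show ?thesis by linarith
qed


lemma ode_upper: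
  fixes \<phi> \<phi>' :: "real \<Rightarrow> real" and lam c a t :: real
  assumes "a \<le> t" "lam \<noteq> 0" "continuous_on {a..t} \<phi>"
    and "\<And>u. a < u \<Longrightarrow> u < t \<Longrightarrow> (\<phi> has_real_derivative \<phi>' u) (at u)"
    and "\<And>u. a < u \<Longrightarrow> u < t \<Longrightarrow> \<phi>' u \<le> c - lam * \<phi> u"
  shows "\<phi> t \<le> c / lam + (\<phi> a - c / lam) * exp (- lam * (t - a))"
proof -
  define \<psi> where "\<psi> u = (\<phi> u - c / lam) * exp (lam * (u - a))" for u
  have "\<psi> t \<le> \<psi> a"
  proof (rule DERIV_nonpos_imp_decreasing_open[OF assms(1)])
    fix u assume u: "a < u" "u < t"
    have "(\<psi> has_real_derivative (\<phi>' u * exp (lam * (u - a)) + (\<phi> u - c / lam) * (exp (lam * (u - a)) * lam))) (at u)"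
      unfolding \<psi>_def by (auto intro!: derivative_eq_intros assms(4)[OF u])
    moreover have "\<phi>' u * exp (lam * (u - a)) + (\<phi> u - c / lam) * (exp (lam * (u - a)) * lam)
        = (\<phi>' u - (c - lam * \<phi> u)) * exp (lam * (u - a))"
      using assms(2) by (simp add: field_simps)
    moreover have "(\<phi>' u - (c - lam * \<phi> u)) * exp (lam * (u - a)) \<le> 0"
      using assms(5)[OF u] by (simp add: mult_nonpos_nonneg)
    ultimately show "\<exists>y. (\<psi> has_real_derivative y) (at u) \<and> y \<le> 0" by metis
  next
    show "continuous_on {a..t} \<psi>" unfolding \<psi>_def
      by (intro continuous_intros assms(3))
  qed
  then have "(\<phi> t - c / lam) * exp (lam * (t - a)) \<le> \<phi> a - c / lam" unfolding \<psi>_def by simp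
  then have "(\<phi> t - c / lam) * exp (lam * (t - a)) * exp (- lam * (t - a)) \<le> (\<phi> a - c / lam) * exp (- lam * (t - a))"
    by (simp add: mult_right_mono)
  then show ?thesis by (simp add: mult.assoc flip: exp_add)
qed

lemma ode_lower:
  fixes \<phi> \<phi>' :: "real \<Rightarrow> real" and lam c a t :: real
  assumes "a \<le> t" "lam \<noteq> 0" "continuous_on {a..t} \<phi>"
    and "\<And>u. a < u \<Longrightarrow> u < t \<Longrightarrow> (\<phi> has_real_derivative \<phi>' u) (at u)"
    and "\<And>u. a < u \<Longrightarrow> u < t \<Longrightarrow> \<phi>' u \<ge> c - lam * \<phi> u"
  shows "\<phi> t \<ge> c / lam + (\<phi> a - c / lam) * exp (- lam * (t - a))"
proof -
  have "(- \<phi>) t \<le> (- c) / lam + ((- \<phi>) a - (- c) / lam) * exp (- lam * (t - a))"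
  proof (rule ode_upper[OF assms(1,2), where \<phi>'="\<lambda>u. - \<phi>' u"])
    show "continuous_on {a..t} (- \<phi>)" using assms(3) by (simp add: fun_Compl_def continuous_on_minus)
    fix u assume u: "a < u" "u < t"
    show "((- \<phi>) has_real_derivative - \<phi>' u) (at u)"
      using DERIV_minus[OF assms(4)[OF u]] by (simp add: fun_Compl_def)
    show "- \<phi>' u \<le> - c - lam * (- \<phi>) u" using assms(5)[OF u] by simp
  qed
  then show ?thesis by (simp add: algebra_simps)
qed

lemma pw_le: fixes u :: real assumes "0 \<le> u" "k \<le> m" shows "u ^ k \<le> 1 + u ^ m"
proof (cases "u \<le> 1")
  case True
  then have "u ^ k \<le> 1" using assms by (simp add: power_le_one)
  then show ?thesis using assms by (smt (verit) zero_le_power)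
next
  case False
  then have "u ^ k \<le> u ^ m" using assms by (intro power_increasing) auto
  then show ?thesis by simp
qed

lemma step4_bound1: fixes Y :: real
  shows "\<bar>(Y + 1) ^ 4 - Y ^ 4\<bar> \<le> 15 * (1 + \<bar>Y\<bar> ^ 3)"
proof -
  define u where "u = \<bar>Y\<bar>"
  have u0: "u \<ge> 0" unfolding u_def by simp
  have h1: "u \<le> 1 + u^3" using pw_le[OF u0, of 1 3] by simp
  have h2: "u^2 \<le> 1 + u^3" using pw_le[OF u0, of 2 3] by simp
  have e1: "(Y + 1) ^ 4 - Y ^ 4 = 4 * Y^3 + 6 * Y^2 + 4 * Y + 1" by algebra
  have a3: "\<bar>Y^3\<bar> = u^3" unfolding u_def by (simp add: power_abs)
  have a2: "Y^2 = u^2" unfolding u_def by simp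
  have a1: "\<bar>Y\<bar> = u" unfolding u_def by simp
  have t1: "\<bar>4 * Y^3\<bar> = 4 * u^3" using a3 by simp
  have t2: "\<bar>4 * Y\<bar> = 4 * u" using a1 by simp
  have "\<bar>4 * Y^3 + 6 * Y^2 + 4 * Y + 1\<bar> \<le> \<bar>4 * Y^3\<bar> + 6 * Y^2 + \<bar>4 * Y\<bar> + 1"
    by (smt (verit) zero_le_power2)
  also have "\<dots> \<le> 15 * (1 + u ^ 3)" unfolding t1 t2 a2 using h1 h2 zero_le_power[OF u0, of 3] by (smt (verit))
  finally have r1: "\<bar>4 * Y^3 + 6 * Y^2 + 4 * Y + 1\<bar> \<le> 15 * (1 + u ^ 3)" .
  show ?thesis using r1 e1 a1 by simp
qed

lemma step4_bound: fixes Y :: real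
  shows "\<bar>(Y + 1) ^ 4 - Y ^ 4\<bar> \<le> 15 * (1 + \<bar>Y\<bar> ^ 3)"
    and "\<bar>(Y - 1) ^ 4 - Y ^ 4\<bar> \<le> 15 * (1 + \<bar>Y\<bar> ^ 3)"
proof -
  show "\<bar>(Y + 1) ^ 4 - Y ^ 4\<bar> \<le> 15 * (1 + \<bar>Y\<bar> ^ 3)" by (rule step4_bound1)
  have "(Y - 1) ^ 4 - Y ^ 4 = ((-Y) + 1) ^ 4 - (-Y) ^ 4" by algebra
  then show "\<bar>(Y - 1) ^ 4 - Y ^ 4\<bar> \<le> 15 * (1 + \<bar>Y\<bar> ^ 3)" using step4_bound1[of "-Y"] by simp
qed

locale bdp =
  fixes \<alpha> \<beta> \<theta> :: real and x :: int and p :: "real \<Rightarrow> int \<Rightarrow> real"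
  assumes apos: "\<alpha> > 0" and bpos: "\<beta> > 0" and tpos: "\<theta> > 0"
    and law: "bd_law \<alpha> \<beta> \<theta> x p"
begin

definition b :: "int \<Rightarrow> real" where "b y = birth_rate \<alpha> \<theta> y"
definition d :: "int \<Rightarrow> real" where "d y = death_rate \<beta> \<theta> y"
definition dp :: "real \<Rightarrow> int \<Rightarrow> real" where
  "dp t y = b (y-1) * p t (y-1) + d (y+1) * p t (y+1) - (b y + d y) * p t y"
definition Lg :: "(int \<Rightarrow> real) \<Rightarrow> int \<Rightarrow> real" where
  "Lg g y = b y * (g (y+1) - g y) + d y * (g (y-1) - g y)"
definition E :: "(int \<Rightarrow> real) \<Rightarrow> real \<Rightarrow> real" where
  "E g t = (\<Sum>\<^sub>\<infinity>y. g y * p t y)"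

lemma p0: "p 0 y = (if y = x then 1 else 0)"
  using law unfolding bd_law_def by blast
lemma pnn: "t \<ge> 0 \<Longrightarrow> p t y \<ge> 0"
  using law unfolding bd_law_def by blast
lemma psum: "t \<ge> 0 \<Longrightarrow> (p t has_sum 1) UNIV"
  using law unfolding bd_law_def by auto
lemma pcont: "continuous_on {0..} (\<lambda>t. p t y)"
  using law unfolding bd_law_def by blast
lemma pder: "t > 0 \<Longrightarrow> ((\<lambda>s. p s y) has_real_derivative dp t y) (at t)"
  using law unfolding bd_law_def dp_def b_def d_def by blast

lemma b_ge: "b y \<ge> \<alpha>" and d_ge: "d y \<ge> \<beta>"
  using tpos by (auto simp: b_def d_def birth_rate_def death_rate_def neg_part_def pos_part_def)
lemma b_pos: "b y > 0" and d_pos: "d y > 0"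
  using b_ge[of y] d_ge[of y] apos bpos by auto
lemma b_le: "b y \<le> \<alpha> + \<theta> * \<bar>of_int y\<bar>" and d_le: "d y \<le> \<beta> + \<theta> * \<bar>of_int y\<bar>"
  using tpos by (auto simp: b_def d_def birth_rate_def death_rate_def neg_part_def pos_part_def max_def)
lemma b_minus_d: "b y - d y = \<alpha> - \<beta> - \<theta> * of_int y"
  by (auto simp: b_def d_def birth_rate_def death_rate_def neg_part_def pos_part_def max_def algebra_simps)
lemma b_plus_d: "b y + d y = \<alpha> + \<beta> + \<theta> * \<bar>of_int y\<bar>"
  by (auto simp: b_def d_def birth_rate_def death_rate_def neg_part_def pos_part_def max_def algebra_simps)
lemma bd_step: "b z - b (z-1) + d (z-1) - d z = - \<theta>"
  by (auto simp: b_def d_def birth_rate_def death_rate_def neg_part_def pos_part_def max_def algebra_simps)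

lemma reidx:
  assumes s1: "(\<lambda>z. g (z+1) * b z * p t z) summable_on UNIV"
    and s2: "(\<lambda>z. g (z-1) * d z * p t z) summable_on UNIV"
    and s3: "(\<lambda>z. g z * (b z + d z) * p t z) summable_on UNIV"
  shows "(\<lambda>y. g y * dp t y) summable_on UNIV"
    and "(\<Sum>\<^sub>\<infinity>y. g y * dp t y) = (\<Sum>\<^sub>\<infinity>z. Lg g z * p t z)"
proof -
  define f1 where "f1 z = g (z+1) * b z * p t z" for z
  define f2 where "f2 z = g (z-1) * d z * p t z" for z
  define f3 where "f3 z = g z * (b z + d z) * p t z" for z
  have bij1: "bij_betw (\<lambda>y::int. y - 1) UNIV UNIV"
    by (rule bij_betwI[where g="\<lambda>y. y+1"]) auto
  have bij2: "bij_betw (\<lambda>y::int. y + 1) UNIV UNIV"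
    by (rule bij_betwI[where g="\<lambda>y. y-1"]) auto
  have r1: "(\<lambda>y. f1 (y-1)) summable_on UNIV" "(\<Sum>\<^sub>\<infinity>y. f1 (y-1)) = infsum f1 UNIV"
    using summable_on_reindex_bij_betw[OF bij1, of f1] infsum_reindex_bij_betw[OF bij1, of f1] s1
    unfolding f1_def by auto
  have r2: "(\<lambda>y. f2 (y+1)) summable_on UNIV" "(\<Sum>\<^sub>\<infinity>y. f2 (y+1)) = infsum f2 UNIV"
    using summable_on_reindex_bij_betw[OF bij2, of f2] infsum_reindex_bij_betw[OF bij2, of f2] s2
    unfolding f2_def by auto
  have eq: "g y * dp t y = f1 (y-1) + f2 (y+1) - f3 y" for y
    unfolding f1_def f2_def f3_def dp_def by (simp add: algebra_simps)
  have eq2: "Lg g z * p t z = f1 z + f2 z - f3 z" for z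
    unfolding f1_def f2_def f3_def Lg_def by (simp add: algebra_simps)
  have s3': "f3 summable_on UNIV" using s3 unfolding f3_def .
  have s1': "f1 summable_on UNIV" using s1 unfolding f1_def .
  have s2': "f2 summable_on UNIV" using s2 unfolding f2_def .
  show "(\<lambda>y. g y * dp t y) summable_on UNIV"
    unfolding eq by (intro summable_on_diff_r summable_on_add r1 r2 s3')
  have "(\<Sum>\<^sub>\<infinity>y. g y * dp t y) = (\<Sum>\<^sub>\<infinity>y. f1 (y-1) + f2 (y+1) - f3 y)"
    unfolding eq ..
  also have "\<dots> = infsum f1 UNIV + infsum f2 UNIV - infsum f3 UNIV"
    by (simp add: infsum_diff_r infsum_add summable_on_add r1 r2 s3')
  also have "\<dots> = (\<Sum>\<^sub>\<infinity>z. f1 z + f2 z - f3 z)"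
    by (simp add: infsum_diff_r infsum_add summable_on_add s1' s2' s3')
  also have "\<dots> = (\<Sum>\<^sub>\<infinity>z. Lg g z * p t z)" unfolding eq2 ..
  finally show "(\<Sum>\<^sub>\<infinity>y. g y * dp t y) = (\<Sum>\<^sub>\<infinity>z. Lg g z * p t z)" .
qed

lemma summable_fin_supp:
  fixes f :: "int \<Rightarrow> real"
  assumes "\<And>y. \<bar>y\<bar> > int n \<Longrightarrow> f y = 0"
  shows "f summable_on UNIV"
proof -
  have "f summable_on {-int n..int n}" by simp
  then show ?thesis
    by (subst summable_on_cong_neutral[of UNIV "{-int n..int n}" f f, symmetric]) (use assms in auto)
qed

lemma infsum_fin_supp:
  fixes f :: "int \<Rightarrow> real"
  assumes "\<And>y. \<bar>y\<bar> > int n \<Longrightarrow> f y = 0"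
  shows "(\<Sum>\<^sub>\<infinity>y. f y) = (\<Sum>y\<in>{-int n..int n}. f y)"
proof -
  have "infsum f UNIV = infsum f {-int n..int n}" by (rule infsum_cong_neutral) (use assms in auto)
  then show ?thesis by simp
qed

lemma Lg_shift: "Lg (\<lambda>y. g y + c) = Lg g"
  unfolding Lg_def by (rule ext) (simp add: algebra_simps)

lemma p_summable: "t \<ge> 0 \<Longrightarrow> p t summable_on UNIV"
  using psum has_sum_imp_summable by blast
lemma p_infsum: "t \<ge> 0 \<Longrightarrow> (\<Sum>\<^sub>\<infinity>y. p t y) = 1"
  using psum infsumI by blast

lemma bounded_summable:
  assumes "t \<ge> 0" "\<And>y. \<bar>g y\<bar> \<le> B"
  shows "(\<lambda>y. g y * p t y) summable_on UNIV"
proof (rule summable_on_compare_r)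
  show "(\<lambda>y. B * p t y) summable_on UNIV" using p_summable[OF assms(1)] by (rule summable_on_cmult_right)
  fix y show "\<bar>g y * p t y\<bar> \<le> B * p t y"
    using assms(2)[of y] pnn[OF assms(1), of y] by (simp add: abs_mult mult_right_mono)
qed

lemma fin_supp_E:
  assumes "\<And>y. \<bar>y\<bar> > int n \<Longrightarrow> g y = 0"
  shows "E g t = (\<Sum>y\<in>{-int n..int n}. g y * p t y)"
  unfolding E_def by (rule infsum_fin_supp) (use assms in auto)

lemma fin_supp_cont:
  assumes "\<And>y. \<bar>y\<bar> > int n \<Longrightarrow> g y = 0"
  shows "continuous_on {0..} (E g)"
proof -
  have "continuous_on {0..} (\<lambda>t. \<Sum>y\<in>{-int n..int n}. g y * p t y)"
    by (intro continuous_intros pcont)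
  then show ?thesis using fin_supp_E[OF assms] by (simp add: fun_eq_iff)
qed

lemma fin_supp_deriv:
  assumes "\<And>y. \<bar>y\<bar> > int n \<Longrightarrow> g y = 0" and t: "t > 0"
  shows "(E g has_real_derivative (\<Sum>\<^sub>\<infinity>z. Lg g z * p t z)) (at t)"
proof -
  have "((\<lambda>s. \<Sum>y\<in>{-int n..int n}. g y * p s y) has_real_derivative
          (\<Sum>y\<in>{-int n..int n}. g y * dp t y)) (at t)"
    by (intro DERIV_sum DERIV_cmult pder t)
  moreover have "(\<Sum>y\<in>{-int n..int n}. g y * dp t y) = (\<Sum>\<^sub>\<infinity>y. g y * dp t y)"
    by (rule infsum_fin_supp[symmetric]) (use assms in auto)
  moreover have "(\<Sum>\<^sub>\<infinity>y. g y * dp t y) = (\<Sum>\<^sub>\<infinity>z. Lg g z * p t z)"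
    by (rule reidx(2); rule summable_fin_supp[of "n+1"]) (use assms in auto)
  moreover have "E g = (\<lambda>s. \<Sum>y\<in>{-int n..int n}. g y * p s y)"
    by (rule ext) (rule fin_supp_E[OF assms(1)])
  ultimately show ?thesis by simp
qed

end

context bdp begin
definition C4 :: real where "C4 = 90 * (\<alpha> + \<beta> + \<theta>)"
definition K4 :: "real \<Rightarrow> real" where "K4 t = (1 + \<bar>of_int x\<bar> ^ 4) * exp (C4 * t)"
definition fN :: "nat \<Rightarrow> int \<Rightarrow> real" where "fN N y = min (\<bar>of_int y\<bar> ^ 4) (real N ^ 4)"

lemma C4_pos: "C4 > 0" using apos bpos tpos unfolding C4_def by simp

lemma b_le2: "b y \<le> (\<alpha> + \<beta> + \<theta>) * (1 + \<bar>of_int y\<bar>)"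
proof -
  have "\<theta> * \<bar>of_int y\<bar> \<le> (\<alpha> + \<beta> + \<theta>) * \<bar>of_int y\<bar>" by (rule mult_right_mono) (use apos bpos in auto)
  moreover have "(\<alpha> + \<beta> + \<theta>) * (1 + \<bar>of_int y\<bar>) = (\<alpha> + \<beta> + \<theta>) + (\<alpha> + \<beta> + \<theta>) * \<bar>of_int y\<bar>"
    by (simp add: algebra_simps)
  ultimately show ?thesis using b_le[of y] apos bpos tpos by linarith
qed
lemma d_le2: "d y \<le> (\<alpha> + \<beta> + \<theta>) * (1 + \<bar>of_int y\<bar>)"
proof -
  have "\<theta> * \<bar>of_int y\<bar> \<le> (\<alpha> + \<beta> + \<theta>) * \<bar>of_int y\<bar>" by (rule mult_right_mono) (use apos bpos in auto)
  moreover have "(\<alpha> + \<beta> + \<theta>) * (1 + \<bar>of_int y\<bar>) = (\<alpha> + \<beta> + \<theta>) + (\<alpha> + \<beta> + \<theta>) * \<bar>of_int y\<bar>"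
    by (simp add: algebra_simps)
  ultimately show ?thesis using d_le[of y] apos bpos tpos by linarith
qed

lemma E_at0: "E g 0 = g x"
proof -
  have "E g 0 = (\<Sum>\<^sub>\<infinity>y\<in>{x}. g y * p 0 y)" unfolding E_def
    by (rule infsum_cong_neutral) (auto simp: p0)
  then show ?thesis by (simp add: p0)
qed

lemma Lg_fN: "Lg (fN N) y \<le> C4 * (1 + fN N y)"
proof -
  define u where "u = \<bar>(of_int y::real)\<bar>"
  have u0: "u \<ge> 0" unfolding u_def by simp
  show ?thesis
  proof (cases "\<bar>y\<bar> < int N")
    case True
    have le1: "\<bar>of_int (y + 1)\<bar> \<le> (real N)" "\<bar>of_int (y - 1)\<bar> \<le> (real N)" "\<bar>of_int y\<bar> \<le> real N"
      using True by linarith+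
    have f1: "fN N (y+1) = (of_int y + 1) ^ 4"
      using power_mono[OF le1(1), of 4] by (simp add: fN_def power_even_abs)
    have f2: "fN N (y-1) = (of_int y - 1) ^ 4"
      using power_mono[OF le1(2), of 4] by (simp add: fN_def power_even_abs)
    have f0: "fN N y = u ^ 4"
      using power_mono[OF le1(3), of 4] by (simp add: fN_def u_def)
    have u4: "u ^ 4 = (of_int y) ^ 4" unfolding u_def by (simp add: power_even_abs)
    have D1: "\<bar>fN N (y+1) - fN N y\<bar> \<le> 15 * (1 + u ^ 3)"
      using step4_bound(1)[of "of_int y"] unfolding f1 f0 u4 by (simp add: u_def)
    have D2: "\<bar>fN N (y-1) - fN N y\<bar> \<le> 15 * (1 + u ^ 3)"
      using step4_bound(2)[of "of_int y"] unfolding f2 f0 u4 by (simp add: u_def)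
    define A where "A = \<alpha> + \<beta> + \<theta>"
    have A0: "A > 0" unfolding A_def using apos bpos tpos by simp
    have bb: "b y \<le> A * (1 + u)" "d y \<le> A * (1 + u)" using b_le2 d_le2 unfolding A_def u_def by auto
    have "Lg (fN N) y \<le> b y * \<bar>fN N (y+1) - fN N y\<bar> + d y * \<bar>fN N (y-1) - fN N y\<bar>"
    proof -
      have "b y * (fN N (y+1) - fN N y) \<le> b y * \<bar>fN N (y+1) - fN N y\<bar>"
        by (rule mult_left_mono) (use b_pos[of y] in auto)
      moreover have "d y * (fN N (y-1) - fN N y) \<le> d y * \<bar>fN N (y-1) - fN N y\<bar>"
        by (rule mult_left_mono) (use d_pos[of y] in auto)
      ultimately show ?thesis unfolding Lg_def by linarith
    qed
    also have "\<dots> \<le> A * (1 + u) * (15 * (1 + u ^ 3)) + A * (1 + u) * (15 * (1 + u ^ 3))"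
      using b_pos[of y] d_pos[of y] bb D1 D2
      by (intro add_mono mult_mono) auto
    also have "\<dots> = 30 * A * (1 + u + u^3 + u^4)" by algebra
    also have "\<dots> \<le> 30 * A * (3 * (1 + u ^ 4))"
      using pw_le[OF u0, of 1 4] pw_le[OF u0, of 3 4] A0 by (intro mult_left_mono) auto
    also have "\<dots> = C4 * (1 + fN N y)" unfolding C4_def A_def f0 by (simp add: algebra_simps)
    finally show ?thesis .
  next
    case False
    have ge: "real N \<le> u" using False unfolding u_def by linarith
    have f0: "fN N y = real N ^ 4"
      using power_mono[OF ge, of 4] by (simp add: fN_def u_def)
    have "fN N (y+1) \<le> real N ^ 4" "fN N (y-1) \<le> real N ^ 4" unfolding fN_def by auto
    then have "b y * (fN N (y+1) - fN N y) \<le> 0" "d y * (fN N (y-1) - fN N y) \<le> 0"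
      unfolding f0 using b_pos[of y] d_pos[of y] by (auto intro: mult_nonneg_nonpos)
    then have "Lg (fN N) y \<le> 0" unfolding Lg_def by linarith
    moreover have "0 \<le> C4 * (1 + fN N y)" using C4_pos unfolding fN_def by simp
    ultimately show ?thesis by linarith
  qed
qed

lemma fN_le: "fN N y \<le> real N ^ 4" and fN_nn: "fN N y \<ge> 0" and fN_le2: "fN N y \<le> \<bar>of_int y\<bar> ^ 4"
  unfolding fN_def by auto

lemma fN_supp: "\<bar>y\<bar> > int N \<Longrightarrow> fN N y - real N ^ 4 = 0"
proof -
  assume "\<bar>y\<bar> > int N"
  then have ge: "real N \<le> \<bar>of_int y\<bar>" by linarith
  show ?thesis using power_mono[OF ge, of 4] by (simp add: fN_def)
qed

lemma EfN_bound:
  assumes t: "t \<ge> 0"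
  shows "1 + E (fN N) t \<le> K4 t"
proof -
  define g where "g y = fN N y - real N ^ 4" for y
  have gs: "\<And>y. \<bar>y\<bar> > int N \<Longrightarrow> g y = 0" unfolding g_def using fN_supp by blast
  have Eeq: "E (fN N) s = E g s + real N ^ 4" if s0: "s \<ge> 0" for s
  proof -
    have sg: "(\<lambda>y. g y * p s y) summable_on UNIV" by (rule summable_fin_supp[of N]) (simp add: gs)
    have sc: "(\<lambda>y. real N ^ 4 * p s y) summable_on UNIV"
      by (rule summable_on_cmult_right[OF p_summable[OF s0]])
    have "E (fN N) s = (\<Sum>\<^sub>\<infinity>y. g y * p s y + real N ^ 4 * p s y)"
      unfolding E_def g_def by (simp add: algebra_simps)
    also have "\<dots> = E g s + real N ^ 4 * (\<Sum>\<^sub>\<infinity>y. p s y)"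
      unfolding E_def infsum_add[OF sg sc] infsum_cmult_right' ..
    finally show ?thesis using p_infsum[OF s0] by simp
  qed
  have cont: "continuous_on {0..t} (E (fN N))"
  proof -
    have c1: "continuous_on {0..t} (E g)"
      using fin_supp_cont[of N g, OF gs] continuous_on_subset by fastforce
    have "continuous_on {0..t} (\<lambda>s. E g s + real N ^ 4)"
      by (rule continuous_on_add[OF c1 continuous_on_const])
    then show ?thesis
    proof (rule continuous_on_eq)
      fix s assume "s \<in> {0..t}"
      then show "E g s + real N ^ 4 = E (fN N) s" using Eeq[of s] by simp
    qed
  qed
  have der: "(E (fN N) has_real_derivative (\<Sum>\<^sub>\<infinity>z. Lg (fN N) z * p s z)) (at s)" if s0: "0 < s" for s
  proof -
    have Lgeq: "Lg g = Lg (fN N)"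
    proof -
      have "g = (\<lambda>y. fN N y + (- (real N ^ 4)))" unfolding g_def by (simp add: fun_eq_iff)
      then show ?thesis using Lg_shift by metis
    qed
    have d1: "((\<lambda>s. E g s + real N ^ 4) has_real_derivative (\<Sum>\<^sub>\<infinity>z. Lg (fN N) z * p s z)) (at s)"
      using DERIV_add[OF fin_supp_deriv[of N g, OF gs s0] DERIV_const[of "real N ^ 4"]] Lgeq by simp
    have ev0: "eventually (\<lambda>r. r \<in> {0<..}) (nhds s)"
      by (rule eventually_nhds_in_open) (use s0 in auto)
    have ev: "eventually (\<lambda>r. E g r + real N ^ 4 = E (fN N) r) (nhds s)"
    proof (rule eventually_mono[OF ev0])
      fix r :: real assume "r \<in> {0<..}"
      then show "E g r + real N ^ 4 = E (fN N) r" using Eeq[of r] by simp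
    qed
    show ?thesis using DERIV_cong_ev[OF refl ev refl] d1 by blast
  qed
  have dle: "(\<Sum>\<^sub>\<infinity>z. Lg (fN N) z * p s z) \<le> C4 - (- C4) * E (fN N) s" if s0': "0 < s" for s
  proof -
    have s0: "s \<ge> 0" using s0' by simp
    have sLg: "(\<lambda>z. Lg (fN N) z * p s z) summable_on UNIV"
    proof (rule summable_fin_supp[of "N+1"])
      fix z :: int assume z: "\<bar>z\<bar> > int (N+1)"
      then have zz: "\<bar>z\<bar> > int N" "\<bar>z+1\<bar> > int N" "\<bar>z-1\<bar> > int N" by auto
      have "fN N z = real N ^ 4" using fN_supp[OF zz(1)] by simp
      moreover have "fN N (z+1) = real N ^ 4" using fN_supp[OF zz(2)] by simp
      moreover have "fN N (z-1) = real N ^ 4" using fN_supp[OF zz(3)] by simp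
      ultimately show "Lg (fN N) z * p s z = 0" unfolding Lg_def by simp
    qed
    have s3: "(\<lambda>z. fN N z * p s z) summable_on UNIV"
    proof (rule bounded_summable[OF s0])
      fix y show "\<bar>fN N y\<bar> \<le> real N ^ 4" using fN_le[of N y] fN_nn[of N y] by simp
    qed
    have sp: "(\<lambda>z. C4 * p s z) summable_on UNIV" by (rule summable_on_cmult_right[OF p_summable[OF s0]])
    have sq: "(\<lambda>z. C4 * (fN N z * p s z)) summable_on UNIV" by (rule summable_on_cmult_right[OF s3])
    have s2: "(\<lambda>z. C4 * p s z + C4 * (fN N z * p s z)) summable_on UNIV" by (rule summable_on_add[OF sp sq])
    have "(\<Sum>\<^sub>\<infinity>z. Lg (fN N) z * p s z) \<le> (\<Sum>\<^sub>\<infinity>z. C4 * p s z + C4 * (fN N z * p s z))"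
    proof (rule infsum_mono[OF sLg s2])
      fix z :: int
      have "Lg (fN N) z * p s z \<le> C4 * (1 + fN N z) * p s z"
        by (rule mult_right_mono[OF Lg_fN pnn[OF s0]])
      then show "Lg (fN N) z * p s z \<le> C4 * p s z + C4 * (fN N z * p s z)" by (simp add: algebra_simps)
    qed
    also have "\<dots> = C4 * (\<Sum>\<^sub>\<infinity>z. p s z) + C4 * E (fN N) s"
      unfolding E_def infsum_add[OF sp sq] infsum_cmult_right' ..
    finally show ?thesis using p_infsum[OF s0] by simp
  qed
  have "E (fN N) t \<le> C4 / (- C4) + (E (fN N) 0 - C4 / (- C4)) * exp (- (- C4) * (t - 0))"
  proof (rule ode_upper[OF t _ cont der dle])
    show "- C4 \<noteq> 0" using C4_pos by simp
  qed auto
  moreover have E0: "E (fN N) 0 \<le> \<bar>of_int x\<bar> ^ 4" using E_at0 fN_le2 by simp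
  ultimately have "E (fN N) t \<le> -1 + (E (fN N) 0 + 1) * exp (C4 * t)" using C4_pos by simp
  also have "\<dots> \<le> -1 + (\<bar>of_int x\<bar> ^ 4 + 1) * exp (C4 * t)"
    using E0 by (intro add_left_mono mult_right_mono) auto
  finally show ?thesis unfolding K4_def by (simp add: algebra_simps)
qed

definition w4 :: "int \<Rightarrow> real" where "w4 y = 1 + \<bar>of_int y\<bar> ^ 4"

lemma mom4:
  assumes t: "t \<ge> 0"
  shows "(\<lambda>y. w4 y * p t y) summable_on UNIV" and "(\<Sum>\<^sub>\<infinity>y. w4 y * p t y) \<le> K4 t"
proof -
  have key: "(\<Sum>y\<in>F. w4 y * p t y) \<le> K4 t" if F: "finite F" for F
  proof -
    define N where "N = (\<Sum>y\<in>F. nat \<bar>y\<bar>)"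
    have Nb: "\<bar>y\<bar> \<le> int N" if "y \<in> F" for y
    proof -
      have "nat \<bar>y\<bar> \<le> N" unfolding N_def using member_le_sum[OF that _ F, of "\<lambda>y. nat \<bar>y\<bar>"] by simp
      then show ?thesis by linarith
    qed
    have sN: "(\<lambda>y. (1 + fN N y) * p t y) summable_on UNIV"
      by (rule bounded_summable[where B="1 + real N ^ 4"]) (use t fN_le fN_nn in auto)
    have "(\<Sum>y\<in>F. w4 y * p t y) = (\<Sum>y\<in>F. (1 + fN N y) * p t y)"
    proof (rule sum.cong[OF refl])
      fix y assume "y \<in> F"
      then have "\<bar>of_int y\<bar> \<le> (real N)" using Nb by (metis of_int_abs of_int_of_nat_eq of_int_le_iff)
      then have "fN N y = \<bar>of_int y\<bar> ^ 4" using power_mono[of "\<bar>of_int y\<bar>" "real N" 4] by (simp add: fN_def)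
      then show "w4 y * p t y = (1 + fN N y) * p t y" unfolding w4_def by simp
    qed
    also have "\<dots> \<le> (\<Sum>\<^sub>\<infinity>y. (1 + fN N y) * p t y)"
      by (rule finite_sum_le_infsum[OF sN F]) (use t pnn fN_nn in auto)
    also have "\<dots> = 1 + E (fN N) t"
    proof -
      have s3: "(\<lambda>z. fN N z * p t z) summable_on UNIV"
        by (rule bounded_summable[where B="real N ^ 4"]) (use t fN_le fN_nn in auto)
      have "(\<Sum>\<^sub>\<infinity>y. (1 + fN N y) * p t y) = (\<Sum>\<^sub>\<infinity>y. p t y + fN N y * p t y)"
        by (simp add: algebra_simps)
      also have "\<dots> = (\<Sum>\<^sub>\<infinity>y. p t y) + E (fN N) t" unfolding E_def
        by (rule infsum_add[OF p_summable[OF t] s3])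
      finally show ?thesis by (simp add: p_infsum t)
    qed
    also have "\<dots> \<le> K4 t" by (rule EfN_bound[OF t])
    finally show ?thesis .
  qed
  show s: "(\<lambda>y. w4 y * p t y) summable_on UNIV"
  proof (rule nonneg_bdd_above_summable_on)
    show "bdd_above (sum (\<lambda>y. w4 y * p t y) ` {F. F \<subseteq> UNIV \<and> finite F})"
      by (rule bdd_aboveI[where M="K4 t"]) (use key in auto)
    fix y :: int show "0 \<le> w4 y * p t y" using pnn[OF t, of y] by (simp add: w4_def)
  qed
  show "(\<Sum>\<^sub>\<infinity>y. w4 y * p t y) \<le> K4 t"
    by (rule infsum_le_finite_sums[OF s]) (use key in auto)
qed

end

lemma deriv_limit:
  fixes F F' :: "nat \<Rightarrow> real \<Rightarrow> real" and G G' :: "real \<Rightarrow> real"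
  assumes S: "convex S" "open S" "x0 \<in> S"
    and der: "\<And>n x. x \<in> S \<Longrightarrow> (F n has_real_derivative F' n x) (at x)"
    and unif: "\<And>e. e > 0 \<Longrightarrow> \<exists>N. \<forall>n\<ge>N. \<forall>x\<in>S. \<bar>F' n x - G' x\<bar> \<le> e"
    and lim: "\<And>x. x \<in> S \<Longrightarrow> (\<lambda>n. F n x) \<longlonglongrightarrow> G x"
  shows "(G has_real_derivative G' x0) (at x0)"
proof -
  have derf: "\<And>n x. x \<in> S \<Longrightarrow> (F n has_derivative (*) (F' n x)) (at x within S)"
    using der has_field_derivative_def has_field_derivative_at_within by blast
  have nle: "\<forall>\<^sub>F n in sequentially. \<forall>x\<in>S. \<forall>h. norm ((*) (F' n x) h - (*) (G' x) h) \<le> e * norm h"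
    if e: "e > 0" for e
  proof -
    obtain N where N: "\<forall>n\<ge>N. \<forall>x\<in>S. \<bar>F' n x - G' x\<bar> \<le> e" using unif[OF e] by blast
    show ?thesis unfolding eventually_sequentially
    proof (intro exI allI impI ballI)
      fix n x h assume "N \<le> n" "x \<in> S"
      then have "\<bar>F' n x - G' x\<bar> \<le> e" using N by blast
      then have "\<bar>F' n x - G' x\<bar> * \<bar>h\<bar> \<le> e * \<bar>h\<bar>" by (rule mult_right_mono) simp
      then show "norm ((*) (F' n x) h - (*) (G' x) h) \<le> e * norm h"
        by (simp add: left_diff_distrib[symmetric] abs_mult)
    qed
  qed
  obtain g where g: "\<forall>x\<in>S. (\<lambda>n. F n x) \<longlonglongrightarrow> g x \<and> (g has_derivative (*) (G' x)) (at x within S)"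
    using has_derivative_sequence[OF S(1) derf nle S(3) lim[OF S(3)]] by blast
  have gG: "g x = G x" if "x \<in> S" for x
    using g that lim[OF that] LIMSEQ_unique by blast
  have "(g has_real_derivative G' x0) (at x0)"
    using g S(2,3) at_within_open[OF S(3,2)] has_field_derivative_def by fastforce
  then show ?thesis
    by (rule has_field_derivative_transform_within_open[OF _ S(2,3)]) (use gG in auto)
qed

context bdp begin

lemma A_pos: "\<alpha> + \<beta> + \<theta> > 0" using apos bpos tpos by simp

lemma sq_shift: fixes Y :: real shows "(Y + 1)^2 \<le> (\<bar>Y\<bar> + 1)^2" "(Y - 1)^2 \<le> (\<bar>Y\<bar> + 1)^2"
proof -
  have "\<bar>Y + 1\<bar> \<le> \<bar>Y\<bar> + 1" "\<bar>Y - 1\<bar> \<le> \<bar>Y\<bar> + 1" by auto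
  then show "(Y + 1)^2 \<le> (\<bar>Y\<bar> + 1)^2" "(Y - 1)^2 \<le> (\<bar>Y\<bar> + 1)^2"
    using power_mono[of "\<bar>Y + 1\<bar>" "\<bar>Y\<bar> + 1" 2] power_mono[of "\<bar>Y - 1\<bar>" "\<bar>Y\<bar> + 1" 2] by auto
qed

lemma poly1: fixes u :: real assumes "u \<ge> 0" shows "(1 + (u + 1)^2) * (1 + u) \<le> 10 * (1 + u^3)"
proof -
  have h1: "u \<le> 1 + u^3" using pw_le[OF assms, of 1 3] by simp
  have h2: "u^2 \<le> 1 + u^3" using pw_le[OF assms, of 2 3] by simp
  have "(1 + (u + 1)^2) * (1 + u) = 2 + 4 * u + 3 * u^2 + u^3" by algebra
  moreover have "10 * (1 + u^3) = 10 + 10 * u^3" by simp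
  ultimately show ?thesis using h1 h2 zero_le_power[OF assms, of 3] by linarith
qed

lemma poly2: fixes u :: real assumes "u \<ge> 0" shows "2 * ((1 + u^2) * (1 + u)) \<le> 10 * (1 + u^3)"
proof -
  have h1: "u \<le> 1 + u^3" using pw_le[OF assms, of 1 3] by simp
  have h2: "u^2 \<le> 1 + u^3" using pw_le[OF assms, of 2 3] by simp
  have "2 * ((1 + u^2) * (1 + u)) = 2 + 2 * u + 2 * u^2 + 2 * u^3" by algebra
  moreover have "10 * (1 + u^3) = 10 + 10 * u^3" by simp
  ultimately show ?thesis using h1 h2 zero_le_power[OF assms, of 3] by linarith
qed

definition w3 :: "int \<Rightarrow> real" where "w3 y = 1 + \<bar>of_int y\<bar> ^ 3"

lemma w3_pos: "w3 y > 0" unfolding w3_def by (simp add: add_pos_nonneg)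

lemma gbounds:
  assumes g: "\<And>y. \<bar>g y\<bar> \<le> Cf * (1 + (of_int y)^2)"
  shows "\<bar>g (z+1)\<bar> * b z \<le> 10 * (\<alpha> + \<beta> + \<theta>) * Cf * w3 z"
    and "\<bar>g (z-1)\<bar> * d z \<le> 10 * (\<alpha> + \<beta> + \<theta>) * Cf * w3 z"
    and "\<bar>g z\<bar> * (b z + d z) \<le> 10 * (\<alpha> + \<beta> + \<theta>) * Cf * w3 z"
proof -
  define A where "A = \<alpha> + \<beta> + \<theta>"
  define u where "u = \<bar>(of_int z :: real)\<bar>"
  have u0: "u \<ge> 0" unfolding u_def by simp
  have "\<bar>g 0\<bar> \<le> Cf" using g[of 0] by simp
  then have Cf: "Cf \<ge> 0" using abs_ge_zero[of "g 0"] by linarith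
  have A0: "A > 0" unfolding A_def using A_pos .
  have bz: "b z \<le> A * (1 + u)" "d z \<le> A * (1 + u)" unfolding A_def u_def using b_le2 d_le2 by auto
  have g1: "\<bar>g (z+1)\<bar> \<le> Cf * (1 + (u + 1)^2)"
  proof -
    have "(of_int (z+1) :: real)^2 \<le> (u + 1)^2" using sq_shift(1)[of "of_int z"] unfolding u_def by simp
    then have "Cf * (1 + (of_int (z+1))^2) \<le> Cf * (1 + (u + 1)^2)" by (intro mult_left_mono) (use Cf in auto)
    then show ?thesis using g[of "z+1"] by linarith
  qed
  have g2: "\<bar>g (z-1)\<bar> \<le> Cf * (1 + (u + 1)^2)"
  proof -
    have "(of_int (z-1) :: real)^2 \<le> (u + 1)^2" using sq_shift(2)[of "of_int z"] unfolding u_def by simp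
    then have "Cf * (1 + (of_int (z-1))^2) \<le> Cf * (1 + (u + 1)^2)" by (intro mult_left_mono) (use Cf in auto)
    then show ?thesis using g[of "z-1"] by linarith
  qed
  have g0: "\<bar>g z\<bar> \<le> Cf * (1 + u^2)" using g[of z] unfolding u_def by simp
  have w: "w3 z = 1 + u^3" unfolding w3_def u_def by simp
  have "\<bar>g (z+1)\<bar> * b z \<le> (Cf * (1 + (u + 1)^2)) * (A * (1 + u))"
    by (rule mult_mono[OF g1 bz(1)]) (use Cf b_pos[of z] in auto)
  also have "\<dots> = A * Cf * ((1 + (u + 1)^2) * (1 + u))" by (simp add: algebra_simps)
  also have "\<dots> \<le> A * Cf * (10 * (1 + u^3))" by (rule mult_left_mono[OF poly1[OF u0]]) (use A0 Cf in auto)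
  finally show "\<bar>g (z+1)\<bar> * b z \<le> 10 * (\<alpha> + \<beta> + \<theta>) * Cf * w3 z" unfolding w A_def by (simp add: algebra_simps)
  have "\<bar>g (z-1)\<bar> * d z \<le> (Cf * (1 + (u + 1)^2)) * (A * (1 + u))"
    by (rule mult_mono[OF g2 bz(2)]) (use Cf d_pos[of z] in auto)
  also have "\<dots> = A * Cf * ((1 + (u + 1)^2) * (1 + u))" by (simp add: algebra_simps)
  also have "\<dots> \<le> A * Cf * (10 * (1 + u^3))" by (rule mult_left_mono[OF poly1[OF u0]]) (use A0 Cf in auto)
  finally show "\<bar>g (z-1)\<bar> * d z \<le> 10 * (\<alpha> + \<beta> + \<theta>) * Cf * w3 z" unfolding w A_def by (simp add: algebra_simps)
  have "b z + d z \<le> 2 * (A * (1 + u))" using bz by simp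
  then have "\<bar>g z\<bar> * (b z + d z) \<le> (Cf * (1 + u^2)) * (2 * (A * (1 + u)))"
    by (intro mult_mono g0) (use Cf b_pos[of z] d_pos[of z] in auto)
  also have "\<dots> = A * Cf * (2 * ((1 + u^2) * (1 + u)))" by (simp add: algebra_simps)
  also have "\<dots> \<le> A * Cf * (10 * (1 + u^3))" by (rule mult_left_mono[OF poly2[OF u0]]) (use A0 Cf in auto)
  finally show "\<bar>g z\<bar> * (b z + d z) \<le> 10 * (\<alpha> + \<beta> + \<theta>) * Cf * w3 z" unfolding w A_def by (simp add: algebra_simps)
qed

lemma w3_le: "w3 y \<le> 2 * w4 y"
proof -
  have "\<bar>(of_int y::real)\<bar> ^ 3 \<le> 1 + \<bar>of_int y\<bar> ^ 4" by (rule pw_le) auto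
  moreover have "0 \<le> \<bar>(of_int y::real)\<bar> ^ 4" by simp
  moreover have "2 * (1 + \<bar>(of_int y::real)\<bar> ^ 4) = 2 + 2 * \<bar>(of_int y::real)\<bar> ^ 4" by simp
  ultimately show ?thesis unfolding w3_def w4_def by linarith
qed

lemma w4_pos: "w4 y > 0" unfolding w4_def by (simp add: add_pos_nonneg)

lemma sq_le_w3: "1 + (of_int y :: real)^2 \<le> 2 * w3 y"
proof -
  have "\<bar>(of_int y::real)\<bar> ^ 2 \<le> 1 + \<bar>of_int y\<bar> ^ 3" by (rule pw_le) auto
  moreover have "0 \<le> \<bar>(of_int y::real)\<bar> ^ 3" by simp
  moreover have "(of_int y::real)^2 = \<bar>of_int y\<bar> ^ 2" by simp
  moreover have "2 * (1 + \<bar>(of_int y::real)\<bar> ^ 3) = 2 + 2 * \<bar>(of_int y::real)\<bar> ^ 3" by simp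
  ultimately show ?thesis unfolding w3_def by linarith
qed

lemma K4_mono: "s \<le> t \<Longrightarrow> K4 s \<le> K4 t"
  unfolding K4_def using C4_pos by (intro mult_left_mono) (auto intro: mult_left_mono)

lemma K4_pos: "K4 t > 0" unfolding K4_def by (simp add: add_pos_nonneg)

lemma summ_w:
  assumes t: "t \<ge> 0" and h: "\<And>y. \<bar>h y\<bar> \<le> c * w4 y"
  shows "(\<lambda>y. h y * p t y) summable_on UNIV"
proof (rule summable_on_compare_r)
  show "(\<lambda>y. c * (w4 y * p t y)) summable_on UNIV" by (rule summable_on_cmult_right[OF mom4(1)[OF t]])
  fix y show "\<bar>h y * p t y\<bar> \<le> c * (w4 y * p t y)"
    using h[of y] pnn[OF t, of y] by (simp add: abs_mult mult_right_mono mult.assoc[symmetric])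
qed

lemma tail_bound:
  assumes t: "t \<ge> 0" and n: "n \<ge> 1"
  shows "(\<lambda>y. if real n \<le> \<bar>of_int y\<bar> then w3 y * p t y else 0) summable_on UNIV"
    and "(\<Sum>\<^sub>\<infinity>y. if real n \<le> \<bar>of_int y\<bar> then w3 y * p t y else 0) \<le> 2 * K4 t / real n"
proof -
  have pw: "(if real n \<le> \<bar>of_int y\<bar> then w3 y * p t y else 0) \<le> (2 / real n) * (w4 y * p t y)" for y
  proof (cases "real n \<le> \<bar>of_int y\<bar>")
    case True
    define u where "u = \<bar>(of_int y::real)\<bar>"
    have un: "real n \<le> u" using True unfolding u_def .
    have u1: "1 \<le> u" using un n by linarith
    have "u \<le> u^4" using u1 by (metis power_one_right power_increasing_iff one_le_numeral le_numeral_extra(1) power_increasing)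
    then have a1: "real n \<le> u^4" using un by linarith
    have "real n * u^3 \<le> u * u^3" by (rule mult_right_mono[OF un]) (simp add: u_def)
    then have a2: "real n * u^3 \<le> u^4" by (simp add: power_eq_if)
    have "real n * w3 y \<le> 2 * w4 y" unfolding w3_def w4_def u_def[symmetric] using a1 a2
      by (simp add: algebra_simps)
    then have w: "w3 y \<le> (2 / real n) * w4 y" using n by (simp add: field_simps)
    have "w3 y * p t y \<le> ((2 / real n) * w4 y) * p t y" by (rule mult_right_mono[OF w pnn[OF t]])
    then show ?thesis using True by (simp add: mult.assoc)
  next
    case False
    then show ?thesis using pnn[OF t, of y] w4_pos[of y] n by simp
  qed
  show s: "(\<lambda>y. if real n \<le> \<bar>of_int y\<bar> then w3 y * p t y else 0) summable_on UNIV"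
  proof (rule summable_on_compare_r[OF summable_on_cmult_right[OF mom4(1)[OF t]]])
    fix y show "\<bar>if real n \<le> \<bar>of_int y\<bar> then w3 y * p t y else 0\<bar> \<le> (2 / real n) * (w4 y * p t y)"
      using pw[of y] pnn[OF t, of y] w3_pos[of y] by (auto simp: abs_mult)
  qed
  have "(\<Sum>\<^sub>\<infinity>y. if real n \<le> \<bar>of_int y\<bar> then w3 y * p t y else 0) \<le> (\<Sum>\<^sub>\<infinity>y. (2 / real n) * (w4 y * p t y))"
    by (rule infsum_mono[OF s summable_on_cmult_right[OF mom4(1)[OF t]]]) (rule pw)
  also have "\<dots> = (2 / real n) * (\<Sum>\<^sub>\<infinity>y. w4 y * p t y)" by (rule infsum_cmult_right')
  also have "\<dots> \<le> (2 / real n) * K4 t" by (rule mult_left_mono[OF mom4(2)[OF t]]) simp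
  finally show "(\<Sum>\<^sub>\<infinity>y. if real n \<le> \<bar>of_int y\<bar> then w3 y * p t y else 0) \<le> 2 * K4 t / real n" by simp
qed

lemma Lg_bound:
  assumes g: "\<And>y. \<bar>g y\<bar> \<le> Cf * (1 + (of_int y)^2)"
  shows "\<bar>Lg g z\<bar> \<le> 30 * (\<alpha> + \<beta> + \<theta>) * Cf * w3 z"
proof -
  have i1: "\<bar>Lg g z\<bar> \<le> \<bar>b z * (g (z+1) - g z)\<bar> + \<bar>d z * (g (z-1) - g z)\<bar>"
    unfolding Lg_def by (rule abs_triangle_ineq)
  have i2: "\<bar>b z * (g (z+1) - g z)\<bar> \<le> b z * (\<bar>g (z+1)\<bar> + \<bar>g z\<bar>)"
    using b_pos[of z] by (simp add: abs_mult mult_left_mono abs_triangle_ineq4)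
  have i3: "\<bar>d z * (g (z-1) - g z)\<bar> \<le> d z * (\<bar>g (z-1)\<bar> + \<bar>g z\<bar>)"
    using d_pos[of z] by (simp add: abs_mult mult_left_mono abs_triangle_ineq4)
  have e: "b z * (\<bar>g (z+1)\<bar> + \<bar>g z\<bar>) + d z * (\<bar>g (z-1)\<bar> + \<bar>g z\<bar>)
     = \<bar>g (z+1)\<bar> * b z + \<bar>g (z-1)\<bar> * d z + \<bar>g z\<bar> * (b z + d z)" by (simp add: algebra_simps)
  have "\<bar>Lg g z\<bar> \<le> \<bar>g (z+1)\<bar> * b z + \<bar>g (z-1)\<bar> * d z + \<bar>g z\<bar> * (b z + d z)"
    using i1 i2 i3 e by linarith
  then show ?thesis using gbounds[OF g, of z] by linarith
qed

lemma reidx_bounded: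
  assumes t: "t \<ge> 0" and g: "\<And>y. \<bar>g y\<bar> \<le> Cf * (1 + (of_int y)^2)"
  shows "(\<lambda>y. g y * dp t y) summable_on UNIV"
    and "(\<Sum>\<^sub>\<infinity>y. g y * dp t y) = (\<Sum>\<^sub>\<infinity>z. Lg g z * p t z)"
    and "(\<lambda>z. Lg g z * p t z) summable_on UNIV"
proof -
  define c where "c = 20 * (\<alpha> + \<beta> + \<theta>) * Cf"
  have "\<bar>g 0\<bar> \<le> Cf" using g[of 0] by simp
  then have Cf: "Cf \<ge> 0" using abs_ge_zero[of "g 0"] by linarith
  have c1: "10 * (\<alpha> + \<beta> + \<theta>) * Cf * w3 z \<le> c * w4 z" for z
  proof -
    have "10 * (\<alpha> + \<beta> + \<theta>) * Cf * w3 z \<le> 10 * (\<alpha> + \<beta> + \<theta>) * Cf * (2 * w4 z)"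
      by (rule mult_left_mono[OF w3_le]) (use A_pos Cf in auto)
    then show ?thesis unfolding c_def by (simp add: algebra_simps)
  qed
  have s1: "(\<lambda>z. g (z+1) * b z * p t z) summable_on UNIV"
  proof (rule summ_w[OF t, where c=c])
    fix z have "\<bar>g (z+1) * b z\<bar> = \<bar>g (z+1)\<bar> * b z" using b_pos[of z] by (simp add: abs_mult)
    then show "\<bar>g (z+1) * b z\<bar> \<le> c * w4 z" using gbounds(1)[OF g, of z] c1[of z] by linarith
  qed
  have s2: "(\<lambda>z. g (z-1) * d z * p t z) summable_on UNIV"
  proof (rule summ_w[OF t, where c=c])
    fix z have "\<bar>g (z-1) * d z\<bar> = \<bar>g (z-1)\<bar> * d z" using d_pos[of z] by (simp add: abs_mult)
    then show "\<bar>g (z-1) * d z\<bar> \<le> c * w4 z" using gbounds(2)[OF g, of z] c1[of z] by linarith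
  qed
  have s3: "(\<lambda>z. g z * (b z + d z) * p t z) summable_on UNIV"
  proof (rule summ_w[OF t, where c=c])
    fix z have "\<bar>g z * (b z + d z)\<bar> = \<bar>g z\<bar> * (b z + d z)" using b_pos[of z] d_pos[of z] by (simp add: abs_mult)
    then show "\<bar>g z * (b z + d z)\<bar> \<le> c * w4 z" using gbounds(3)[OF g, of z] c1[of z] by linarith
  qed
  show "(\<lambda>y. g y * dp t y) summable_on UNIV" by (rule reidx(1)[OF s1 s2 s3])
  show "(\<Sum>\<^sub>\<infinity>y. g y * dp t y) = (\<Sum>\<^sub>\<infinity>z. Lg g z * p t z)" by (rule reidx(2)[OF s1 s2 s3])
  show "(\<lambda>z. Lg g z * p t z) summable_on UNIV"
  proof (rule summ_w[OF t, where c="3 * c"])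
    fix z
    have "\<bar>Lg g z\<bar> \<le> 30 * (\<alpha> + \<beta> + \<theta>) * Cf * w3 z" by (rule Lg_bound[OF g])
    also have "\<dots> = 3 * (10 * (\<alpha> + \<beta> + \<theta>) * Cf * w3 z)" by simp
    also have "\<dots> \<le> 3 * (c * w4 z)" using c1[of z] by simp
    finally show "\<bar>Lg g z\<bar> \<le> 3 * c * w4 z" by simp
  qed
qed

lemma tail_Lg:
  assumes t: "t \<ge> 0" and n: "n \<ge> 1" and g: "\<And>y. \<bar>g y\<bar> \<le> Cf * (1 + (of_int y)^2)"
    and g0: "\<And>y. \<bar>y\<bar> \<le> int n \<Longrightarrow> g y = 0"
  shows "\<bar>\<Sum>\<^sub>\<infinity>z. Lg g z * p t z\<bar> \<le> 30 * (\<alpha> + \<beta> + \<theta>) * Cf * (2 * K4 t / real n)"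
proof -
  define C where "C = 30 * (\<alpha> + \<beta> + \<theta>) * Cf"
  have "\<bar>g 0\<bar> \<le> Cf" using g[of 0] by simp
  then have Cf: "Cf \<ge> 0" using abs_ge_zero[of "g 0"] by linarith
  have C0: "C \<ge> 0" unfolding C_def using A_pos Cf by simp
  have pw: "\<bar>Lg g z * p t z\<bar> \<le> C * (if real n \<le> \<bar>of_int z\<bar> then w3 z * p t z else 0)" for z
  proof (cases "real n \<le> \<bar>of_int z\<bar>")
    case True
    then show ?thesis using Lg_bound[OF g, of z] pnn[OF t, of z] unfolding C_def
      by (simp add: abs_mult mult_right_mono mult.assoc[symmetric])
  next
    case False
    then have "\<bar>z\<bar> < int n" by linarith
    then have "\<bar>z\<bar> \<le> int n" "\<bar>z+1\<bar> \<le> int n" "\<bar>z-1\<bar> \<le> int n" by auto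
    then have "Lg g z = 0" unfolding Lg_def using g0 by simp
    then show ?thesis using False by simp
  qed
  have "\<bar>\<Sum>\<^sub>\<infinity>z. Lg g z * p t z\<bar> \<le> (\<Sum>\<^sub>\<infinity>z. C * (if real n \<le> \<bar>of_int z\<bar> then w3 z * p t z else 0))"
    by (rule infsum_abs_le_r[OF summable_on_cmult_right[OF tail_bound(1)[OF t n]] pw])
  also have "\<dots> = C * (\<Sum>\<^sub>\<infinity>z. (if real n \<le> \<bar>of_int z\<bar> then w3 z * p t z else 0))" by (rule infsum_cmult_right')
  also have "\<dots> \<le> C * (2 * K4 t / real n)" by (rule mult_left_mono[OF tail_bound(2)[OF t n] C0])
  finally show ?thesis unfolding C_def .
qed

lemma gen_deriv:
  assumes f: "\<And>y. \<bar>f y\<bar> \<le> Cf * (1 + (of_int y)^2)" and t: "t > 0"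
  shows "(E f has_real_derivative (\<Sum>\<^sub>\<infinity>z. Lg f z * p t z)) (at t)"
proof -
  have "\<bar>f 0\<bar> \<le> Cf" using f[of 0] by simp
  then have Cf: "Cf \<ge> 0" using abs_ge_zero[of "f 0"] by linarith
  define A where "A = \<alpha> + \<beta> + \<theta>"
  have A0: "A > 0" unfolding A_def using A_pos .
  define S where "S = {t/2 <..< t+1}"
  define fW where "fW n y = (if \<bar>y\<bar> \<le> int n then f y else 0)" for n y
  define gn where "gn n y = (if \<bar>y\<bar> \<le> int n then 0 else f y)" for n y
  define F where "F n s = (\<Sum>y\<in>{-int n..int n}. f y * p s y)" for n s
  define F' where "F' n s = (\<Sum>y\<in>{-int n..int n}. f y * dp s y)" for n s
  define G' where "G' s = (\<Sum>\<^sub>\<infinity>z. Lg f z * p s z)" for s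
  have fWb: "\<bar>fW n y\<bar> \<le> Cf * (1 + (of_int y)^2)" for n y
    unfolding fW_def using f[of y] Cf by auto
  have gnb: "\<bar>gn n y\<bar> \<le> Cf * (1 + (of_int y)^2)" for n y
    unfolding gn_def using f[of y] Cf by auto
  have fsplit: "f y = fW n y + gn n y" for n y unfolding fW_def gn_def by simp
  have gn0: "\<bar>y\<bar> \<le> int n \<Longrightarrow> gn n y = 0" for n y unfolding gn_def by simp
  have c1: "E f s = F n s + (\<Sum>\<^sub>\<infinity>y. gn n y * p s y)" if s0: "s \<ge> 0" for s n
  proof -
    have sW: "(\<lambda>y. fW n y * p s y) summable_on UNIV"
      by (rule summable_fin_supp[of n]) (simp add: fW_def)
    have sg: "(\<lambda>y. gn n y * p s y) summable_on UNIV"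
    proof (rule summ_w[OF s0, where c="4 * Cf"])
      fix y
      have "\<bar>gn n y\<bar> \<le> Cf * (2 * w3 y)" using gnb[of n y] mult_left_mono[OF sq_le_w3 Cf, of y] by linarith
      also have "\<dots> \<le> Cf * (2 * (2 * w4 y))" using w3_le[of y] Cf by (intro mult_left_mono) auto
      finally show "\<bar>gn n y\<bar> \<le> 4 * Cf * w4 y" by simp
    qed
    have "E f s = (\<Sum>\<^sub>\<infinity>y. fW n y * p s y + gn n y * p s y)" unfolding E_def
      by (rule infsum_cong) (simp add: fsplit[of _ n] algebra_simps)
    also have "\<dots> = (\<Sum>\<^sub>\<infinity>y. fW n y * p s y) + (\<Sum>\<^sub>\<infinity>y. gn n y * p s y)"
      by (rule infsum_add[OF sW sg])
    also have "(\<Sum>\<^sub>\<infinity>y. fW n y * p s y) = (\<Sum>y\<in>{-int n..int n}. fW n y * p s y)"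
      by (rule infsum_fin_supp) (simp add: fW_def)
    also have "\<dots> = F n s" unfolding F_def fW_def by (rule sum.cong) auto
    finally show ?thesis .
  qed
  have c2: "\<bar>\<Sum>\<^sub>\<infinity>y. gn n y * p s y\<bar> \<le> 2 * Cf * (2 * K4 s / real n)" if s0: "s \<ge> 0" and n: "n \<ge> 1" for s n
  proof -
    have pw: "\<bar>gn n y * p s y\<bar> \<le> 2 * Cf * (if real n \<le> \<bar>of_int y\<bar> then w3 y * p s y else 0)" for y
    proof (cases "\<bar>y\<bar> \<le> int n")
      case True then show ?thesis using Cf w3_pos[of y] pnn[OF s0, of y] by (auto simp: gn_def)
    next
      case False
      then have r: "real n \<le> \<bar>of_int y\<bar>" by linarith
      have "\<bar>gn n y\<bar> \<le> 2 * Cf * w3 y" using gnb[of n y] mult_left_mono[OF sq_le_w3 Cf, of y] by linarith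
      then have "\<bar>gn n y\<bar> * p s y \<le> 2 * Cf * w3 y * p s y" by (rule mult_right_mono) (use pnn[OF s0] in auto)
      then show ?thesis using r pnn[OF s0, of y] by (simp add: abs_mult)
    qed
    have "\<bar>\<Sum>\<^sub>\<infinity>y. gn n y * p s y\<bar> \<le> (\<Sum>\<^sub>\<infinity>y. 2 * Cf * (if real n \<le> \<bar>of_int y\<bar> then w3 y * p s y else 0))"
      by (rule infsum_abs_le_r[OF summable_on_cmult_right[OF tail_bound(1)[OF s0 n]] pw])
    also have "\<dots> = 2 * Cf * (\<Sum>\<^sub>\<infinity>y. (if real n \<le> \<bar>of_int y\<bar> then w3 y * p s y else 0))"
      by (rule infsum_cmult_right')
    also have "\<dots> \<le> 2 * Cf * (2 * K4 s / real n)" by (rule mult_left_mono[OF tail_bound(2)[OF s0 n]]) (use Cf in auto)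
    finally show ?thesis .
  qed
  have c3: "G' s = F' n s + (\<Sum>\<^sub>\<infinity>z. Lg (gn n) z * p s z)" if s0: "s \<ge> 0" for s n
  proof -
    have "G' s = (\<Sum>\<^sub>\<infinity>y. f y * dp s y)" unfolding G'_def by (rule reidx_bounded(2)[OF s0 f, symmetric])
    also have "\<dots> = (\<Sum>\<^sub>\<infinity>y. fW n y * dp s y + gn n y * dp s y)"
      by (rule infsum_cong) (simp add: fsplit[of _ n] algebra_simps)
    also have "\<dots> = (\<Sum>\<^sub>\<infinity>y. fW n y * dp s y) + (\<Sum>\<^sub>\<infinity>y. gn n y * dp s y)"
      by (rule infsum_add[OF reidx_bounded(1)[OF s0 fWb] reidx_bounded(1)[OF s0 gnb]])
    also have "(\<Sum>\<^sub>\<infinity>y. fW n y * dp s y) = (\<Sum>y\<in>{-int n..int n}. fW n y * dp s y)"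
      by (rule infsum_fin_supp) (simp add: fW_def)
    also have "\<dots> = F' n s" unfolding F'_def fW_def by (rule sum.cong) auto
    also have "(\<Sum>\<^sub>\<infinity>y. gn n y * dp s y) = (\<Sum>\<^sub>\<infinity>z. Lg (gn n) z * p s z)"
      by (rule reidx_bounded(2)[OF s0 gnb])
    finally show ?thesis .
  qed
  have c4: "\<bar>\<Sum>\<^sub>\<infinity>z. Lg (gn n) z * p s z\<bar> \<le> 30 * A * Cf * (2 * K4 s / real n)" if s0: "s \<ge> 0" and n: "n \<ge> 1" for s n
    unfolding A_def by (rule tail_Lg[OF s0 n gnb gn0])
  define KT where "KT = K4 (t + 1)"
  have KT0: "KT > 0" unfolding KT_def by (rule K4_pos)
  have Spos: "s \<in> S \<Longrightarrow> s > 0" for s unfolding S_def using t by auto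
  have SK: "s \<in> S \<Longrightarrow> K4 s \<le> KT" for s unfolding S_def KT_def by (intro K4_mono) auto
  show ?thesis
  proof (rule deriv_limit[where S=S and F=F and F'=F' and G'=G', unfolded G'_def])
    show "convex S" "open S" unfolding S_def by auto
    show "t \<in> S" unfolding S_def using t by auto
    fix n x assume x: "x \<in> S"
    show "(F n has_real_derivative F' n x) (at x)" unfolding F_def F'_def
      by (intro DERIV_sum DERIV_cmult pder Spos[OF x])
  next
    fix e :: real assume e: "e > 0"
    define M where "M = 60 * A * Cf * KT"
    have M0: "M \<ge> 0" unfolding M_def using A0 Cf KT0 by simp
    define N where "N = nat \<lceil>M / e\<rceil> + 1"
    have N1: "N \<ge> 1" unfolding N_def by simp
    have NM: "M / e \<le> real N" unfolding N_def by linarith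
    have "\<forall>n\<ge>N. \<forall>x\<in>S. \<bar>F' n x - G' x\<bar> \<le> e"
    proof (intro allI impI ballI)
      fix n x assume n: "N \<le> n" and x: "x \<in> S"
      have n1: "n \<ge> 1" using n N1 by simp
      have x0: "x \<ge> 0" using Spos[OF x] by simp
      have "\<bar>F' n x - G' x\<bar> = \<bar>\<Sum>\<^sub>\<infinity>z. Lg (gn n) z * p x z\<bar>" using c3[OF x0, of n] by simp
      also have "\<dots> \<le> 30 * A * Cf * (2 * K4 x / real n)" by (rule c4[OF x0 n1])
      also have "\<dots> \<le> 30 * A * Cf * (2 * KT / real n)"
        using SK[OF x] A0 Cf n1 by (intro mult_left_mono divide_right_mono) auto
      also have "\<dots> = M / real n" unfolding M_def by simp
      also have "\<dots> \<le> M / real N" using n N1 M0 by (intro divide_left_mono) auto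
      also have "\<dots> \<le> e" using NM e N1 by (simp add: field_simps)
      finally show "\<bar>F' n x - G' x\<bar> \<le> e" .
    qed
    then show "\<exists>N. \<forall>n\<ge>N. \<forall>x\<in>S. \<bar>F' n x - (\<Sum>\<^sub>\<infinity>z. Lg f z * p x z)\<bar> \<le> e"
      unfolding G'_def by blast
  next
    fix x assume x: "x \<in> S"
    have x0: "x \<ge> 0" using Spos[OF x] by simp
    have "(\<lambda>n. F n x - E f x) \<longlonglongrightarrow> 0"
    proof (rule Lim_null_comparison)
      show "\<forall>\<^sub>F n in sequentially. norm (F n x - E f x) \<le> 4 * Cf * K4 x / real n"
        unfolding eventually_sequentially
      proof (intro exI allI impI)
        fix n :: nat assume n: "1 \<le> n"
        have "norm (F n x - E f x) = \<bar>\<Sum>\<^sub>\<infinity>y. gn n y * p x y\<bar>" using c1[OF x0, of n] by simp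
        also have "\<dots> \<le> 2 * Cf * (2 * K4 x / real n)" by (rule c2[OF x0 n])
        finally show "norm (F n x - E f x) \<le> 4 * Cf * K4 x / real n" by simp
      qed
      show "(\<lambda>n. 4 * Cf * K4 x / real n) \<longlonglongrightarrow> 0" by (rule lim_const_over_n)
    qed
    then have "(\<lambda>n. (F n x - E f x) + E f x) \<longlonglongrightarrow> 0 + E f x" by (intro tendsto_add tendsto_const)
    then show "(\<lambda>n. F n x) \<longlonglongrightarrow> E f x" by simp
  qed
qed

end

lemma exp_neg_le: fixes x :: real assumes "x \<ge> 0" shows "exp (- x) \<le> 1 / (1 + x)"
proof -
  have "1 + x \<le> exp x" by (rule exp_ge_add_one_self)
  then have "1 / exp x \<le> 1 / (1 + x)" using assms by (intro divide_left_mono) auto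
  then show ?thesis by (simp add: exp_minus field_simps)
qed

lemma ode_limit:
  fixes \<phi> c :: "real \<Rightarrow> real" and lam L :: real
  assumes lam: "lam > 0"
    and der: "\<And>u. u > 0 \<Longrightarrow> (\<phi> has_real_derivative (c u - lam * \<phi> u)) (at u)"
    and lim: "(c \<longlongrightarrow> L) at_top"
  shows "(\<phi> \<longlongrightarrow> L / lam) at_top"
proof -
  have cont: "continuous_on {a..b} \<phi>" if a0: "0 < a" for a b
  proof (rule continuous_at_imp_continuous_on, rule ballI)
    fix x assume "x \<in> {a..b}"
    then have "x > 0" using a0 by simp
    then show "isCont \<phi> x" by (rule DERIV_isCont[OF der])
  qed
  show ?thesis unfolding tendsto_iff
  proof (intro allI impI)
    fix e :: real assume e: "e > 0"
    have le4: "lam * e / 4 > 0" using lam e by simp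
    have "eventually (\<lambda>u. dist (c u) L < lam * e / 4) at_top"
      using lim le4 unfolding tendsto_iff by blast
    then obtain N where N: "\<And>u. u \<ge> N \<Longrightarrow> dist (c u) L < lam * e / 4"
      unfolding eventually_at_top_linorder by blast
    define T1 where "T1 = max N 1"
    have T1: "T1 > 0" "T1 \<ge> N" unfolding T1_def by auto
    define B where "B = \<bar>\<phi> T1 - L / lam\<bar> + e / 4"
    have B0: "B > 0" unfolding B_def using e by (simp add: add_nonneg_pos)
    have main: "\<bar>\<phi> t - L / lam\<bar> < e" if t: "t \<ge> T1 + 4 * B / (lam * e)" for t
    proof -
      have "4 * B / (lam * e) \<ge> 0" using B0 lam e by simp
      then have tT: "T1 \<le> t" using t by linarith
      define ex where "ex = exp (- lam * (t - T1))"
      have ex0: "ex > 0" unfolding ex_def by simp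
      have up: "\<phi> t \<le> (L + lam * e / 4) / lam + (\<phi> T1 - (L + lam * e / 4) / lam) * ex"
        unfolding ex_def
      proof (rule ode_upper[OF tT _ cont[OF T1(1)]])
        show "lam \<noteq> 0" using lam by simp
        fix u assume u: "T1 < u" "u < t"
        show "(\<phi> has_real_derivative (c u - lam * \<phi> u)) (at u)" using der u T1 by simp
        have "dist (c u) L < lam * e / 4" using N u T1 by simp
        then show "c u - lam * \<phi> u \<le> L + lam * e / 4 - lam * \<phi> u" unfolding dist_real_def abs_less_iff by linarith
      qed
      have lo: "\<phi> t \<ge> (L - lam * e / 4) / lam + (\<phi> T1 - (L - lam * e / 4) / lam) * ex"
        unfolding ex_def
      proof (rule ode_lower[OF tT _ cont[OF T1(1)]])
        show "lam \<noteq> 0" using lam by simp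
        fix u assume u: "T1 < u" "u < t"
        show "(\<phi> has_real_derivative (c u - lam * \<phi> u)) (at u)" using der u T1 by simp
        have "dist (c u) L < lam * e / 4" using N u T1 by simp
        then show "c u - lam * \<phi> u \<ge> L - lam * e / 4 - lam * \<phi> u" unfolding dist_real_def abs_less_iff by linarith
      qed
      have e1: "(L + lam * e / 4) / lam = L / lam + e / 4" "(L - lam * e / 4) / lam = L / lam - e / 4"
        using lam by (simp_all add: field_simps)
      have exle: "ex \<le> 1 / (1 + lam * (t - T1))" unfolding ex_def
        using exp_neg_le[of "lam * (t - T1)"] lam tT by simp
      have "lam * (t - T1) \<ge> lam * (4 * B / (lam * e))" using t lam by (intro mult_left_mono) auto
      then have lt: "lam * (t - T1) \<ge> 4 * B / e" using lam by (simp add: field_simps)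
      have "B * ex \<le> B / (1 + lam * (t - T1))" using exle B0 by (simp add: mult_left_mono divide_inverse)
      also have "\<dots> \<le> B / (1 + 4 * B / e)"
      proof -
        have q: "4 * B / e > 0" using B0 e by simp
        then have "(1 + lam * (t - T1)) * (1 + 4 * B / e) > 0" using lt by (intro mult_pos_pos) linarith+
        then show ?thesis using lt B0 by (intro divide_left_mono) auto
      qed
      also have "\<dots> < e / 4" using B0 e by (simp add: field_simps)
      finally have Bex: "B * ex < e / 4" .
      have d1: "\<bar>\<phi> T1 - (L / lam + e / 4)\<bar> \<le> B" "\<bar>\<phi> T1 - (L / lam - e / 4)\<bar> \<le> B" unfolding B_def using e by auto
      have "\<bar>(\<phi> T1 - (L / lam + e / 4)) * ex\<bar> \<le> B * ex" using d1(1) ex0 by (simp add: abs_mult mult_right_mono)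
      moreover have "\<bar>(\<phi> T1 - (L / lam - e / 4)) * ex\<bar> \<le> B * ex" using d1(2) ex0 by (simp add: abs_mult mult_right_mono)
      moreover have "\<phi> t \<le> L / lam + e / 4 + (\<phi> T1 - (L / lam + e / 4)) * ex" using up e1 by simp
      moreover have "\<phi> t \<ge> L / lam - e / 4 + (\<phi> T1 - (L / lam - e / 4)) * ex" using lo e1 by simp
      ultimately show ?thesis using Bex unfolding abs_le_iff abs_less_iff by linarith
    qed
    show "eventually (\<lambda>t. dist (\<phi> t) (L / lam) < e) at_top"
      unfolding eventually_at_top_linorder dist_real_def using main by blast
  qed
qed

lemma ode_bound:
  fixes \<phi> \<phi>' :: "real \<Rightarrow> real" and lam C t :: real
  assumes lam: "lam > 0"
    and der: "\<And>u. u > 0 \<Longrightarrow> (\<phi> has_real_derivative \<phi>' u) (at u)"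
    and le: "\<And>u. u > 0 \<Longrightarrow> \<phi>' u \<le> C - lam * \<phi> u"
    and t: "t \<ge> 1"
  shows "\<phi> t \<le> max (\<phi> 1) (C / lam)"
proof -
  have cont: "continuous_on {1..t} \<phi>"
  proof (rule continuous_at_imp_continuous_on, rule ballI)
    fix x assume "x \<in> {1..t}"
    then have "x > 0" by simp
    then show "isCont \<phi> x" by (rule DERIV_isCont[OF der])
  qed
  have ph: "\<phi> t \<le> C / lam + (\<phi> 1 - C / lam) * exp (- lam * (t - 1))"
    by (rule ode_upper[where \<phi>'="\<phi>'", OF t _ cont]) (use lam der le in auto)
  moreover have ex1: "exp (- lam * (t - 1)) \<le> 1" using lam t by simp
  moreover have ex0: "exp (- lam * (t - 1)) > 0" by simp
  ultimately show ?thesis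
  proof (cases "\<phi> 1 - C / lam \<ge> 0")
    case True
    have "(\<phi> 1 - C / lam) * exp (- lam * (t - 1)) \<le> \<phi> 1 - C / lam"
      by (rule mult_left_le[OF ex1 True])
    then show ?thesis using ph by linarith
  next
    case False
    then have "(\<phi> 1 - C / lam) * exp (- lam * (t - 1)) \<le> 0"
      using ex0 by (intro mult_nonpos_nonneg) auto
    then show ?thesis using ph by linarith
  qed
qed


context bdp begin

definition mm :: "real \<Rightarrow> real" where "mm = E (\<lambda>y. of_int y)"
definition ss :: "real \<Rightarrow> real" where "ss = E (\<lambda>y. (of_int y)^2)"
definition aa :: "real \<Rightarrow> real" where "aa = E (\<lambda>y. \<bar>of_int y\<bar>)"

lemma w4_ge: "1 \<le> w4 y" "\<bar>of_int y\<bar> \<le> w4 y" "(of_int y)^2 \<le> w4 y"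
proof -
  show "1 \<le> w4 y" unfolding w4_def by simp
  have "\<bar>(of_int y::real)\<bar> ^ 1 \<le> 1 + \<bar>of_int y\<bar> ^ 4" by (rule pw_le) auto
  then show "\<bar>of_int y\<bar> \<le> w4 y" unfolding w4_def by simp
  have "\<bar>(of_int y::real)\<bar> ^ 2 \<le> 1 + \<bar>of_int y\<bar> ^ 4" by (rule pw_le) auto
  then show "(of_int y)^2 \<le> w4 y" unfolding w4_def by simp
qed

lemma summ_basic:
  assumes t: "t \<ge> 0"
  shows "(\<lambda>y. \<bar>of_int y\<bar> * p t y) summable_on UNIV"
    and "(\<lambda>y. of_int y * p t y) summable_on UNIV"
    and "(\<lambda>y. (of_int y)^2 * p t y) summable_on UNIV"
proof -
  show "(\<lambda>y. \<bar>of_int y\<bar> * p t y) summable_on UNIV"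
    by (rule summ_w[OF t, where c=1]) (use w4_ge in auto)
  show "(\<lambda>y. of_int y * p t y) summable_on UNIV"
    by (rule summ_w[OF t, where c=1]) (use w4_ge in auto)
  show "(\<lambda>y. (of_int y)^2 * p t y) summable_on UNIV"
    by (rule summ_w[OF t, where c=1]) (use w4_ge in auto)
qed

lemma E_poly:
  assumes t: "t \<ge> 0"
  shows "E (\<lambda>y. c1 + c2 * \<bar>of_int y\<bar> + c3 * of_int y + c4 * (of_int y)^2) t
       = c1 + c2 * aa t + c3 * mm t + c4 * ss t"
proof -
  note sb = summ_basic[OF t]
  have s1: "(\<lambda>y. c1 * p t y) summable_on UNIV" by (rule summable_on_cmult_right[OF p_summable[OF t]])
  have s2: "(\<lambda>y. c2 * (\<bar>of_int y\<bar> * p t y)) summable_on UNIV" by (rule summable_on_cmult_right[OF sb(1)])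
  have s3: "(\<lambda>y. c3 * (of_int y * p t y)) summable_on UNIV" by (rule summable_on_cmult_right[OF sb(2)])
  have s4: "(\<lambda>y. c4 * ((of_int y)^2 * p t y)) summable_on UNIV" by (rule summable_on_cmult_right[OF sb(3)])
  have "E (\<lambda>y. c1 + c2 * \<bar>of_int y\<bar> + c3 * of_int y + c4 * (of_int y)^2) t
     = (\<Sum>\<^sub>\<infinity>y. ((c1 * p t y + c2 * (\<bar>of_int y\<bar> * p t y)) + c3 * (of_int y * p t y)) + c4 * ((of_int y)^2 * p t y))"
    unfolding E_def by (rule infsum_cong) (simp add: algebra_simps)
  also have "\<dots> = (\<Sum>\<^sub>\<infinity>y. (c1 * p t y + c2 * (\<bar>of_int y\<bar> * p t y)) + c3 * (of_int y * p t y)) + (\<Sum>\<^sub>\<infinity>y. c4 * ((of_int y)^2 * p t y))"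
    by (rule infsum_add[OF summable_on_add[OF summable_on_add[OF s1 s2] s3] s4])
  also have "(\<Sum>\<^sub>\<infinity>y. (c1 * p t y + c2 * (\<bar>of_int y\<bar> * p t y)) + c3 * (of_int y * p t y))
      = (\<Sum>\<^sub>\<infinity>y. c1 * p t y + c2 * (\<bar>of_int y\<bar> * p t y)) + (\<Sum>\<^sub>\<infinity>y. c3 * (of_int y * p t y))"
    by (rule infsum_add[OF summable_on_add[OF s1 s2] s3])
  also have "(\<Sum>\<^sub>\<infinity>y. c1 * p t y + c2 * (\<bar>of_int y\<bar> * p t y))
      = (\<Sum>\<^sub>\<infinity>y. c1 * p t y) + (\<Sum>\<^sub>\<infinity>y. c2 * (\<bar>of_int y\<bar> * p t y))"
    by (rule infsum_add[OF s1 s2])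
  finally show ?thesis unfolding aa_def mm_def ss_def E_def infsum_cmult_right' p_infsum[OF t] by simp
qed

lemma poly_w4:
  "\<bar>c1 + c2 * \<bar>of_int y\<bar> + c3 * of_int y + c4 * (of_int y)^2\<bar> \<le> (\<bar>c1\<bar> + \<bar>c2\<bar> + \<bar>c3\<bar> + \<bar>c4\<bar>) * w4 y"
proof -
  define Y where "Y = (of_int y :: real)"
  have w: "1 \<le> w4 y" "\<bar>Y\<bar> \<le> w4 y" "Y^2 \<le> w4 y" unfolding Y_def using w4_ge by auto
  have "\<bar>c1 + c2 * \<bar>Y\<bar> + c3 * Y + c4 * Y^2\<bar> \<le> \<bar>c1\<bar> + \<bar>c2\<bar> * \<bar>Y\<bar> + \<bar>c3\<bar> * \<bar>Y\<bar> + \<bar>c4\<bar> * Y^2"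
  proof -
    have "\<bar>c1 + c2 * \<bar>Y\<bar> + c3 * Y + c4 * Y^2\<bar> \<le> \<bar>c1 + c2 * \<bar>Y\<bar> + c3 * Y\<bar> + \<bar>c4 * Y^2\<bar>" by (rule abs_triangle_ineq)
    moreover have "\<bar>c1 + c2 * \<bar>Y\<bar> + c3 * Y\<bar> \<le> \<bar>c1 + c2 * \<bar>Y\<bar>\<bar> + \<bar>c3 * Y\<bar>" by (rule abs_triangle_ineq)
    moreover have "\<bar>c1 + c2 * \<bar>Y\<bar>\<bar> \<le> \<bar>c1\<bar> + \<bar>c2 * \<bar>Y\<bar>\<bar>" by (rule abs_triangle_ineq)
    moreover have "\<bar>c2 * \<bar>Y\<bar>\<bar> = \<bar>c2\<bar> * \<bar>Y\<bar>" "\<bar>c3 * Y\<bar> = \<bar>c3\<bar> * \<bar>Y\<bar>" "\<bar>c4 * Y^2\<bar> = \<bar>c4\<bar> * Y^2"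
      by (simp_all add: abs_mult)
    ultimately show ?thesis by linarith
  qed
  also have "\<dots> \<le> \<bar>c1\<bar> * w4 y + \<bar>c2\<bar> * w4 y + \<bar>c3\<bar> * w4 y + \<bar>c4\<bar> * w4 y"
  proof -
    have h1: "\<bar>c1\<bar> \<le> \<bar>c1\<bar> * w4 y" using mult_left_mono[OF w(1), of "\<bar>c1\<bar>"] by simp
    have h2: "\<bar>c2\<bar> * \<bar>Y\<bar> \<le> \<bar>c2\<bar> * w4 y" by (rule mult_left_mono[OF w(2)]) simp
    have h3: "\<bar>c3\<bar> * \<bar>Y\<bar> \<le> \<bar>c3\<bar> * w4 y" by (rule mult_left_mono[OF w(2)]) simp
    have h4: "\<bar>c4\<bar> * Y^2 \<le> \<bar>c4\<bar> * w4 y" by (rule mult_left_mono[OF w(3)]) simp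
    show ?thesis using h1 h2 h3 h4 by linarith
  qed
  also have "\<dots> = (\<bar>c1\<bar> + \<bar>c2\<bar> + \<bar>c3\<bar> + \<bar>c4\<bar>) * w4 y" by (simp add: algebra_simps)
  finally show ?thesis unfolding Y_def .
qed

lemma E_mono_w:
  assumes t: "t \<ge> 0" and le: "\<And>y. f y \<le> g y"
    and bf: "\<And>y. \<bar>f y\<bar> \<le> cf * w4 y" and bg: "\<And>y. \<bar>g y\<bar> \<le> cg * w4 y"
  shows "E f t \<le> E g t"
  unfolding E_def
  by (rule infsum_mono[OF summ_w[OF t bf] summ_w[OF t bg]]) (use le pnn[OF t] in \<open>auto intro: mult_right_mono\<close>)

lemma E_poly_mono:
  assumes t: "t \<ge> 0"
    and le: "\<And>y. c1 + c2 * \<bar>of_int y\<bar> + c3 * of_int y + c4 * (of_int y)^2 \<le> d1 + d2 * \<bar>of_int y\<bar> + d3 * of_int y + d4 * (of_int y)^2"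
  shows "c1 + c2 * aa t + c3 * mm t + c4 * ss t \<le> d1 + d2 * aa t + d3 * mm t + d4 * ss t"
proof -
  have "E (\<lambda>y. c1 + c2 * \<bar>of_int y\<bar> + c3 * of_int y + c4 * (of_int y)^2) t
     \<le> E (\<lambda>y. d1 + d2 * \<bar>of_int y\<bar> + d3 * of_int y + d4 * (of_int y)^2) t"
    by (rule E_mono_w[OF t le poly_w4 poly_w4])
  then show ?thesis unfolding E_poly[OF t] .
qed

lemma Lg_lin: "Lg (\<lambda>y. of_int y) z = \<alpha> - \<beta> - \<theta> * of_int z"
  unfolding Lg_def using b_minus_d[of z] by (simp add: algebra_simps)

lemma Lg_sq: "Lg (\<lambda>y. (of_int y)^2) z = \<alpha> + \<beta> + \<theta> * \<bar>of_int z\<bar> + 2 * (\<alpha> - \<beta>) * of_int z - 2 * \<theta> * (of_int z)^2"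
proof -
  have "Lg (\<lambda>y. (of_int y)^2) z = (b z + d z) + 2 * of_int z * (b z - d z)"
    unfolding Lg_def by (simp add: algebra_simps power2_eq_square)
  then show ?thesis unfolding b_plus_d b_minus_d by (simp add: algebra_simps power2_eq_square)
qed

lemma abs_le_sq: "\<bar>(of_int y::real)\<bar> \<le> 1 * (1 + (of_int y)^2)"
proof -
  have "\<bar>(of_int y::real)\<bar> ^ 1 \<le> 1 + \<bar>of_int y\<bar> ^ 2" by (rule pw_le) auto
  then show ?thesis by simp
qed

lemma mm_der: "u > 0 \<Longrightarrow> (mm has_real_derivative (\<alpha> - \<beta> - \<theta> * mm u)) (at u)"
proof -
  assume u: "u > 0"
  have "(mm has_real_derivative (\<Sum>\<^sub>\<infinity>z. Lg (\<lambda>y. of_int y) z * p u z)) (at u)"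
    unfolding mm_def by (rule gen_deriv[OF _ u, of _ 1]) (use abs_le_sq in auto)
  moreover have "(\<Sum>\<^sub>\<infinity>z. Lg (\<lambda>y. of_int y) z * p u z) = E (\<lambda>y. (\<alpha> - \<beta>) + 0 * \<bar>of_int y\<bar> + (- \<theta>) * of_int y + 0 * (of_int y)^2) u"
    unfolding E_def Lg_lin by (rule infsum_cong) simp
  moreover have "E (\<lambda>y. (\<alpha> - \<beta>) + 0 * \<bar>of_int y\<bar> + (- \<theta>) * of_int y + 0 * (of_int y)^2) u
     = (\<alpha> - \<beta>) + 0 * aa u + (- \<theta>) * mm u + 0 * ss u" by (rule E_poly) (use u in simp)
  ultimately show ?thesis by simp
qed

lemma ss_der: "u > 0 \<Longrightarrow> (ss has_real_derivative (\<alpha> + \<beta> + \<theta> * aa u + 2 * (\<alpha> - \<beta>) * mm u - 2 * \<theta> * ss u)) (at u)"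
proof -
  assume u: "u > 0"
  have "(ss has_real_derivative (\<Sum>\<^sub>\<infinity>z. Lg (\<lambda>y. (of_int y)^2) z * p u z)) (at u)"
    unfolding ss_def by (rule gen_deriv[OF _ u, of _ 1]) auto
  moreover have "(\<Sum>\<^sub>\<infinity>z. Lg (\<lambda>y. (of_int y)^2) z * p u z) = E (\<lambda>y. (\<alpha> + \<beta>) + \<theta> * \<bar>of_int y\<bar> + (2 * (\<alpha> - \<beta>)) * of_int y + (- 2 * \<theta>) * (of_int y)^2) u"
    unfolding E_def Lg_sq by (rule infsum_cong) (simp add: algebra_simps)
  moreover have "E (\<lambda>y. (\<alpha> + \<beta>) + \<theta> * \<bar>of_int y\<bar> + (2 * (\<alpha> - \<beta>)) * of_int y + (- 2 * \<theta>) * (of_int y)^2) u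
     = (\<alpha> + \<beta>) + \<theta> * aa u + (2 * (\<alpha> - \<beta>)) * mm u + (- 2 * \<theta>) * ss u" by (rule E_poly) (use u in simp)
  ultimately show ?thesis by simp
qed

lemma mm_lim: "(mm \<longlongrightarrow> (\<alpha> - \<beta>) / \<theta>) at_top"
  by (rule ode_limit[where c="\<lambda>_. \<alpha> - \<beta>", OF tpos mm_der]) auto

lemma aa_ge_mm: "t \<ge> 0 \<Longrightarrow> \<bar>mm t\<bar> \<le> aa t"
proof -
  assume t: "t \<ge> 0"
  have "0 + 0 * aa t + 1 * mm t + 0 * ss t \<le> 0 + 1 * aa t + 0 * mm t + 0 * ss t"
    by (rule E_poly_mono[OF t]) simp
  moreover have "0 + 0 * aa t + (-1) * mm t + 0 * ss t \<le> 0 + 1 * aa t + 0 * mm t + 0 * ss t"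
    by (rule E_poly_mono[OF t]) simp
  ultimately show ?thesis by simp
qed

lemma aa_le_ss: "t \<ge> 0 \<Longrightarrow> aa t \<le> 1 + ss t"
proof -
  assume t: "t \<ge> 0"
  have "0 + 1 * aa t + 0 * mm t + 0 * ss t \<le> 1 + 0 * aa t + 0 * mm t + 1 * ss t"
    by (rule E_poly_mono[OF t]) (use abs_le_sq in simp)
  then show ?thesis by simp
qed

definition cc :: real where "cc = \<theta> + 2 * \<bar>\<alpha> - \<beta>\<bar>"
definition Cs :: real where "Cs = \<alpha> + \<beta> + cc^2 / (4 * \<theta>)"

lemma quad_bound: fixes u :: real shows "cc * u \<le> \<theta> * u^2 + cc^2 / (4 * \<theta>)"
proof -
  have "0 \<le> (2 * \<theta> * u - cc)^2 / (4 * \<theta>)" using tpos by simp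
  also have "(2 * \<theta> * u - cc)^2 / (4 * \<theta>) = \<theta> * u^2 + cc^2 / (4 * \<theta>) - cc * u"
    using tpos by (simp add: field_simps power2_eq_square)
  finally show ?thesis by simp
qed

lemma ss_bound: "t \<ge> 1 \<Longrightarrow> ss t \<le> max (ss 1) (Cs / \<theta>)"
proof (rule ode_bound[OF tpos ss_der])
  fix u :: real assume u: "u > 0"
  have "0 + \<theta> * aa u + (2 * (\<alpha> - \<beta>)) * mm u + (- \<theta>) * ss u \<le> cc^2 / (4 * \<theta>) + 0 * aa u + 0 * mm u + 0 * ss u"
  proof (rule E_poly_mono)
    show "u \<ge> 0" using u by simp
    fix y
    define Y where "Y = (of_int y :: real)"
    have "2 * (\<alpha> - \<beta>) * Y \<le> \<bar>2 * (\<alpha> - \<beta>) * Y\<bar>" by (rule abs_ge_self)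
    moreover have "\<bar>2 * (\<alpha> - \<beta>) * Y\<bar> = 2 * \<bar>\<alpha> - \<beta>\<bar> * \<bar>Y\<bar>" unfolding abs_mult by simp
    moreover have "cc * \<bar>Y\<bar> \<le> \<theta> * \<bar>Y\<bar>^2 + cc^2 / (4 * \<theta>)" by (rule quad_bound)
    moreover have "cc * \<bar>Y\<bar> = \<theta> * \<bar>Y\<bar> + 2 * \<bar>\<alpha> - \<beta>\<bar> * \<bar>Y\<bar>" unfolding cc_def by (simp add: algebra_simps)
    moreover have "\<theta> * \<bar>Y\<bar>^2 = \<theta> * Y^2" by simp
    moreover have "(- \<theta>) * Y^2 = - (\<theta> * Y^2)" by simp
    ultimately show "0 + \<theta> * \<bar>of_int y\<bar> + (2 * (\<alpha> - \<beta>)) * of_int y + (- \<theta>) * (of_int y)^2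
        \<le> cc^2 / (4 * \<theta>) + 0 * \<bar>of_int y\<bar> + 0 * of_int y + 0 * (of_int y)^2"
      unfolding Y_def by linarith
  qed
  then show "\<alpha> + \<beta> + \<theta> * aa u + 2 * (\<alpha> - \<beta>) * mm u - 2 * \<theta> * ss u \<le> Cs - \<theta> * ss u"
    unfolding Cs_def by linarith
qed

end

lemma int_interval_Suc:
  "{- int (Suc n)..int (Suc n)} = insert (- int n - 1) (insert (int n + 1) {- int n..int n})"
  by auto

lemma telescope_int:
  fixes \<phi> :: "int \<Rightarrow> real"
  shows "(\<Sum>y\<in>{- int n..int n}. \<phi> (y - 1) - \<phi> y) = \<phi> (- int n - 1) - \<phi> (int n)"
proof (induction n)
  case 0
  then show ?case by simp
next
  case (Suc n)
  have "(\<Sum>y\<in>{- int (Suc n)..int (Suc n)}. \<phi> (y - 1) - \<phi> y)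
      = (\<phi> (- int n - 1 - 1) - \<phi> (- int n - 1)) + ((\<phi> (int n + 1 - 1) - \<phi> (int n + 1))
        + (\<Sum>y\<in>{- int n..int n}. \<phi> (y - 1) - \<phi> y))"
    unfolding int_interval_Suc by (subst sum.insert; auto)+
  then show ?case using Suc by (simp add: add.commute)
qed

lemma telescope_int2:
  fixes \<psi> :: "int \<Rightarrow> real"
  shows "(\<Sum>y\<in>{- int n..int n}. \<psi> (y + 1) - \<psi> y) = \<psi> (int n + 1) - \<psi> (- int n)"
  using telescope_int[of "\<lambda>y. - \<psi> (y + 1)" n] by simp

lemma sig_bound:
  fixes H Hm Hp B1 D0 \<delta> :: real
  assumes \<delta>: "\<delta> > 0" and B1: "B1 \<ge> 0" and D0: "D0 \<ge> 0"
  shows "(H / sqrt (H^2 + \<delta>^2)) * (B1 * (Hm - H) - D0 * (H - Hp))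
         \<le> B1 * \<bar>Hm\<bar> + D0 * \<bar>Hp\<bar> - (B1 + D0) * (\<bar>H\<bar> - \<delta>)"
proof -
  define r where "r = sqrt (H^2 + \<delta>^2)"
  have r0: "r > 0" unfolding r_def using \<delta> by (simp add: add_nonneg_pos)
  have rH: "\<bar>H\<bar> \<le> r" unfolding r_def by (rule real_le_rsqrt) simp
  have rH2: "r \<le> \<bar>H\<bar> + \<delta>" unfolding r_def
  proof (rule real_le_lsqrt)
    show "0 \<le> \<bar>H\<bar> + \<delta>" using \<delta> by simp
    have "(\<bar>H\<bar> + \<delta>)^2 = H^2 + \<delta>^2 + 2 * \<bar>H\<bar> * \<delta>" by (simp add: power2_eq_square algebra_simps)
    moreover have "0 \<le> 2 * \<bar>H\<bar> * \<delta>" using \<delta> by simp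
    ultimately show "H^2 + \<delta>^2 \<le> (\<bar>H\<bar> + \<delta>)^2" by linarith
  qed
  define \<sigma> where "\<sigma> = H / r"
  have s1: "\<bar>\<sigma>\<bar> \<le> 1" unfolding \<sigma>_def using rH r0 by (simp add: abs_div)
  have s2: "\<sigma> * H \<ge> \<bar>H\<bar> - \<delta>"
  proof -
    have "\<sigma> * H = H^2 / r" unfolding \<sigma>_def by (simp add: power2_eq_square)
    moreover have "(\<bar>H\<bar> - \<delta>) * r \<le> H^2"
    proof (cases "\<bar>H\<bar> - \<delta> \<ge> 0")
      case True
      then have "(\<bar>H\<bar> - \<delta>) * r \<le> (\<bar>H\<bar> - \<delta>) * (\<bar>H\<bar> + \<delta>)" by (rule mult_left_mono[OF rH2])
      also have "\<dots> = H^2 - \<delta>^2" by (simp add: algebra_simps power2_eq_square)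
      finally have "(\<bar>H\<bar> - \<delta>) * r \<le> H^2 - \<delta>^2" .
      moreover have "0 \<le> \<delta>^2" by simp
      ultimately show ?thesis by linarith
    next
      case False
      then have "(\<bar>H\<bar> - \<delta>) * r \<le> 0" using r0 by (simp add: mult_nonpos_nonneg)
      moreover have "0 \<le> H^2" by simp
      ultimately show ?thesis by linarith
    qed
    ultimately show ?thesis using r0 by (simp add: pos_le_divide_eq)
  qed
  have m1: "\<sigma> * Hm \<le> \<bar>Hm\<bar>"
  proof -
    have "\<sigma> * Hm \<le> \<bar>\<sigma> * Hm\<bar>" by simp
    also have "\<dots> = \<bar>\<sigma>\<bar> * \<bar>Hm\<bar>" by (simp add: abs_mult)
    also have "\<dots> \<le> 1 * \<bar>Hm\<bar>" by (rule mult_right_mono[OF s1]) simp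
    finally show ?thesis by simp
  qed
  have m2: "\<sigma> * Hp \<le> \<bar>Hp\<bar>"
  proof -
    have "\<sigma> * Hp \<le> \<bar>\<sigma> * Hp\<bar>" by simp
    also have "\<dots> = \<bar>\<sigma>\<bar> * \<bar>Hp\<bar>" by (simp add: abs_mult)
    also have "\<dots> \<le> 1 * \<bar>Hp\<bar>" by (rule mult_right_mono[OF s1]) simp
    finally show ?thesis by simp
  qed
  have "\<sigma> * (B1 * (Hm - H) - D0 * (H - Hp)) = B1 * (\<sigma> * Hm) + D0 * (\<sigma> * Hp) - (B1 + D0) * (\<sigma> * H)"
    by (simp add: algebra_simps)
  also have "\<dots> \<le> B1 * \<bar>Hm\<bar> + D0 * \<bar>Hp\<bar> - (B1 + D0) * (\<bar>H\<bar> - \<delta>)"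
  proof -
    have "B1 * (\<sigma> * Hm) \<le> B1 * \<bar>Hm\<bar>" by (rule mult_left_mono[OF m1 B1])
    moreover have "D0 * (\<sigma> * Hp) \<le> D0 * \<bar>Hp\<bar>" by (rule mult_left_mono[OF m2 D0])
    moreover have "(B1 + D0) * (\<bar>H\<bar> - \<delta>) \<le> (B1 + D0) * (\<sigma> * H)" by (rule mult_left_mono[OF s2]) (use B1 D0 in simp)
    ultimately show ?thesis by linarith
  qed
  finally show ?thesis unfolding \<sigma>_def r_def .
qed

lemma drop_eps:
  fixes X Y c :: real
  assumes "\<And>\<delta>. \<delta> > 0 \<Longrightarrow> X \<le> Y + \<delta> * c" and "c \<ge> 0"
  shows "X \<le> Y"
proof (rule ccontr)
  assume "\<not> X \<le> Y"
  then have g: "X - Y > 0" by simp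
  define \<delta> where "\<delta> = (X - Y) / (2 * (c + 1))"
  have d0: "\<delta> > 0" unfolding \<delta>_def using g assms(2) by simp
  have "\<delta> * c < X - Y"
  proof -
    have "\<delta> * c \<le> \<delta> * (c + 1)" using d0 by simp
    also have "\<dots> = (X - Y) / 2" unfolding \<delta>_def using assms(2) by (simp add: field_simps)
    finally have "\<delta> * c \<le> (X - Y) / 2" .
    moreover have "(X - Y) / 2 < X - Y" using g by simp
    ultimately show ?thesis by linarith
  qed
  then show False using assms(1)[OF d0] by linarith
qed

lemma drop_n:
  fixes X Y C :: real
  assumes "\<And>n::nat. n \<ge> 1 \<Longrightarrow> X \<le> Y + C / real n"
  shows "X \<le> Y"
proof (rule ccontr)
  assume "\<not> X \<le> Y"
  then have g: "X - Y > 0" by simp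
  define n where "n = nat \<lceil>\<bar>C\<bar> / (X - Y)\<rceil> + 1"
  have n1: "n \<ge> 1" unfolding n_def by simp
  have "\<bar>C\<bar> / (X - Y) < real n" unfolding n_def by linarith
  then have "\<bar>C\<bar> < real n * (X - Y)" using g by (simp add: field_simps)
  then have "C / real n < X - Y" using n1 by (simp add: field_simps)
  then show False using assms[OF n1] by linarith
qed

lemma sqrt_le_abs_plus: fixes H \<delta> :: real assumes "\<delta> \<ge> 0" shows "sqrt (H^2 + \<delta>^2) \<le> \<bar>H\<bar> + \<delta>"
proof (rule real_le_lsqrt)
  show "0 \<le> \<bar>H\<bar> + \<delta>" using assms by simp
  have "(\<bar>H\<bar> + \<delta>)^2 = H^2 + \<delta>^2 + 2 * \<bar>H\<bar> * \<delta>" by (simp add: power2_eq_square algebra_simps)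
  moreover have "0 \<le> 2 * \<bar>H\<bar> * \<delta>" using assms by simp
  ultimately show "H^2 + \<delta>^2 \<le> (\<bar>H\<bar> + \<delta>)^2" by linarith
qed

lemma abs_le_sqrt_plus: fixes H \<delta> :: real shows "\<bar>H\<bar> \<le> sqrt (H^2 + \<delta>^2)"
  by (rule real_le_rsqrt) simp

lemma sqrt_deriv:
  fixes f :: "real \<Rightarrow> real"
  assumes f: "(f has_real_derivative D) (at s)" and \<delta>: "\<delta> > 0"
  shows "((\<lambda>s. sqrt ((f s)^2 + \<delta>^2) - \<delta>) has_real_derivative (f s / sqrt ((f s)^2 + \<delta>^2)) * D) (at s)"
proof -
  have pos: "(f s)^2 + \<delta>^2 > 0" using \<delta> by (simp add: add_nonneg_pos)
  have inner: "((\<lambda>s. (f s)^2 + \<delta>^2) has_real_derivative (of_nat 2 * (D * (f s)^(2 - Suc 0)) + 0)) (at s)"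
    by (intro DERIV_add DERIV_power f DERIV_const)
  have "((\<lambda>s. sqrt ((f s)^2 + \<delta>^2)) has_real_derivative (inverse (sqrt ((f s)^2 + \<delta>^2)) / 2) * (of_nat 2 * (D * (f s)^(2 - Suc 0)) + 0)) (at s)"
    by (rule DERIV_chain2[OF DERIV_real_sqrt[OF pos] inner])
  then have "((\<lambda>s. sqrt ((f s)^2 + \<delta>^2) - \<delta>) has_real_derivative (inverse (sqrt ((f s)^2 + \<delta>^2)) / 2) * (of_nat 2 * (D * (f s)^(2 - Suc 0)) + 0) - 0) (at s)"
    by (intro DERIV_diff DERIV_const)
  moreover have "(inverse (sqrt ((f s)^2 + \<delta>^2)) / 2) * (of_nat 2 * (D * (f s)^(2 - Suc 0)) + 0) - 0 = (f s / sqrt ((f s)^2 + \<delta>^2)) * D"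
    by (simp add: field_simps)
  ultimately show ?thesis by simp
qed

context bdp begin

definition GG :: "real \<Rightarrow> int \<Rightarrow> real" where "GG t y = E (\<lambda>z. if y \<le> z then 1 else 0) t"
definition flux :: "real \<Rightarrow> int \<Rightarrow> real" where "flux t y = b (y-1) * p t (y-1) - d y * p t y"

lemma ind_le_sq: "\<bar>(if P then 1 else 0 :: real)\<bar> \<le> 1 * (1 + (of_int z)^2)"
  by simp

lemma GG_der: "t > 0 \<Longrightarrow> ((\<lambda>s. GG s y) has_real_derivative flux t y) (at t)"
proof -
  assume t: "t > 0"
  define f where "f z = (if y \<le> z then 1 else 0 :: real)" for z
  have d: "(E f has_real_derivative (\<Sum>\<^sub>\<infinity>z. Lg f z * p t z)) (at t)"
    by (rule gen_deriv[OF _ t, of _ 1]) (simp add: f_def)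
  have Lf: "Lg f z * p t z = (if z = y - 1 then b (y-1) * p t (y-1) else 0) - (if z = y then d y * p t y else 0)" for z
    unfolding Lg_def f_def by auto
  define n where "n = nat (\<bar>y\<bar> + 1)"
  have inW: "y - 1 \<in> {- int n..int n}" "y \<in> {- int n..int n}" unfolding n_def by auto
  have "(\<Sum>\<^sub>\<infinity>z. Lg f z * p t z) = (\<Sum>z\<in>{- int n..int n}. Lg f z * p t z)"
  proof (rule infsum_fin_supp)
    fix z assume "\<bar>z\<bar> > int n"
    then have "z \<noteq> y - 1" "z \<noteq> y" unfolding n_def by auto
    then show "Lg f z * p t z = 0" unfolding Lf by simp
  qed
  also have "\<dots> = flux t y" unfolding Lf sum_subtractf flux_def using inW by simp
  finally have "(E f has_real_derivative flux t y) (at t)" using d by simp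
  moreover have "(\<lambda>s. GG s y) = E f" unfolding GG_def f_def by (rule ext) simp
  ultimately show ?thesis by simp
qed

lemma GG_summ: "t \<ge> 0 \<Longrightarrow> (\<lambda>z. (if P z then 1 else 0) * p t z) summable_on UNIV"
  by (rule bounded_summable[where B=1]) auto

lemma E_ind_delta: "t \<ge> 0 \<Longrightarrow> E (\<lambda>z. if z = y then 1 else 0) t = p t y"
proof -
  have "E (\<lambda>z. if z = y then 1 else 0) t = (\<Sum>\<^sub>\<infinity>z\<in>{y}. (if z = y then 1 else 0) * p t z)"
    unfolding E_def by (rule infsum_cong_neutral) auto
  then show ?thesis by simp
qed

lemma GG_diff: "t \<ge> 0 \<Longrightarrow> GG t y - GG t (y+1) = p t y"
proof -
  assume t: "t \<ge> 0"
  have "GG t y - GG t (y+1) = (\<Sum>\<^sub>\<infinity>z. (if y \<le> z then 1 else 0) * p t z - (if y + 1 \<le> z then 1 else 0) * p t z)"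
    unfolding GG_def E_def by (rule infsum_diff_r[symmetric]) (rule GG_summ[OF t])+
  also have "\<dots> = E (\<lambda>z. if z = y then 1 else 0) t" unfolding E_def by (rule infsum_cong) auto
  finally show ?thesis using E_ind_delta[OF t] by simp
qed

lemma GG_compl: "t \<ge> 0 \<Longrightarrow> 1 - GG t y = E (\<lambda>z. if z < y then 1 else 0) t"
proof -
  assume t: "t \<ge> 0"
  have "1 - GG t y = (\<Sum>\<^sub>\<infinity>z. p t z) - GG t y" using p_infsum[OF t] by simp
  also have "\<dots> = (\<Sum>\<^sub>\<infinity>z. p t z - (if y \<le> z then 1 else 0) * p t z)"
    unfolding GG_def E_def by (rule infsum_diff_r[symmetric]) (use p_summable[OF t] GG_summ[OF t] in auto)
  also have "\<dots> = E (\<lambda>z. if z < y then 1 else 0) t" unfolding E_def by (rule infsum_cong) auto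
  finally show ?thesis .
qed

lemma E_ind_bounds: "t \<ge> 0 \<Longrightarrow> 0 \<le> E (\<lambda>z. if P z then 1 else 0) t \<and> E (\<lambda>z. if P z then 1 else 0) t \<le> 1"
proof -
  assume t: "t \<ge> 0"
  have "E (\<lambda>z. if P z then 1 else 0) t \<le> (\<Sum>\<^sub>\<infinity>z. p t z)" unfolding E_def
    by (rule infsum_mono[OF GG_summ[OF t] p_summable[OF t]]) (use pnn[OF t] in auto)
  moreover have "0 \<le> E (\<lambda>z. if P z then 1 else 0) t" unfolding E_def
    by (rule infsum_nonneg) (use pnn[OF t] in auto)
  ultimately show ?thesis using p_infsum[OF t] by simp
qed

lemma GG_01: "t \<ge> 0 \<Longrightarrow> 0 \<le> GG t y \<and> GG t y \<le> 1"
  unfolding GG_def by (rule E_ind_bounds)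

lemma tail_ind:
  assumes t: "t \<ge> 0" and n: "n \<ge> 1" and P: "\<And>z. P z \<Longrightarrow> real n + 1 \<le> \<bar>of_int z\<bar>"
  shows "(1 + real n) * E (\<lambda>z. if P z then 1 else 0) t \<le> 2 * K4 t / real n"
proof -
  have "(1 + real n) * E (\<lambda>z. if P z then 1 else 0) t = (\<Sum>\<^sub>\<infinity>z. (1 + real n) * ((if P z then 1 else 0) * p t z))"
    unfolding E_def by (rule infsum_cmult_right'[symmetric])
  also have "\<dots> \<le> (\<Sum>\<^sub>\<infinity>z. if real n \<le> \<bar>of_int z\<bar> then w3 z * p t z else 0)"
  proof (rule infsum_mono[OF summable_on_cmult_right[OF GG_summ[OF t]] tail_bound(1)[OF t n]])
    fix z
    show "(1 + real n) * ((if P z then 1 else 0) * p t z) \<le> (if real n \<le> \<bar>of_int z\<bar> then w3 z * p t z else 0)"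
    proof (cases "P z")
      case True
      have zz: "real n + 1 \<le> \<bar>of_int z\<bar>" by (rule P[OF True])
      have "\<bar>(of_int z::real)\<bar> ^ 1 \<le> 1 + \<bar>of_int z\<bar> ^ 3" by (rule pw_le) auto
      then have "1 + real n \<le> w3 z" using zz unfolding w3_def by simp
      then show ?thesis using True zz pnn[OF t, of z] by (auto intro: mult_right_mono)
    next
      case False then show ?thesis using pnn[OF t, of z] w3_pos[of z] by auto
    qed
  qed
  also have "\<dots> \<le> 2 * K4 t / real n" by (rule tail_bound(2)[OF t n])
  finally show ?thesis .
qed

lemma tailG_hi: "t \<ge> 0 \<Longrightarrow> n \<ge> 1 \<Longrightarrow> (1 + real n) * GG t (int n + 1) \<le> 2 * K4 t / real n"
  unfolding GG_def by (rule tail_ind) auto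

lemma tailG_lo: "t \<ge> 0 \<Longrightarrow> n \<ge> 1 \<Longrightarrow> (1 + real n) * (1 - GG t (- int n - 1)) \<le> 2 * K4 t / real n"
  unfolding GG_compl by (rule tail_ind) auto


definition HH :: "real \<Rightarrow> real \<Rightarrow> int \<Rightarrow> real" where "HH h t y = GG (t + h) y - GG t y"

lemma HH_der: "h \<ge> 0 \<Longrightarrow> t > 0 \<Longrightarrow> ((\<lambda>s. HH h s y) has_real_derivative (flux (t + h) y - flux t y)) (at t)"
proof -
  assume h: "h \<ge> 0" and t: "t > 0"
  have "((\<lambda>s. GG s y) has_real_derivative flux (t + h) y) (at (t + h))" using GG_der h t by simp
  then have "((\<lambda>s. GG (s + h) y) has_real_derivative flux (t + h) y) (at t)" by (simp add: DERIV_shift)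
  then show ?thesis unfolding HH_def by (intro DERIV_diff GG_der t)
qed

lemma flux_HH:
  assumes h: "h \<ge> 0" and t: "t \<ge> 0"
  shows "flux (t + h) y - flux t y = b (y-1) * (HH h t (y-1) - HH h t y) - d y * (HH h t y - HH h t (y+1))"
proof -
  have th: "t + h \<ge> 0" using h t by simp
  have q: "p (t + h) z - p t z = HH h t z - HH h t (z+1)" for z
    unfolding HH_def using GG_diff[OF th, of z] GG_diff[OF t, of z] by simp
  have "flux (t + h) y - flux t y = b (y-1) * (p (t+h) (y-1) - p t (y-1)) - d y * (p (t+h) y - p t y)"
    unfolding flux_def by (simp add: algebra_simps)
  also have "\<dots> = b (y-1) * (HH h t (y-1) - HH h t y) - d y * (HH h t y - HH h t (y+1))"
    unfolding q by simp
  finally show ?thesis .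
qed

lemma abs_diff_nonneg_le: fixes a c :: real shows "0 \<le> a \<Longrightarrow> 0 \<le> c \<Longrightarrow> \<bar>a - c\<bar> \<le> a + c" by simp

lemma En_bound:
  assumes h: "h \<ge> 0" and s: "0 \<le> s" "s \<le> T" and n: "n \<ge> 1"
  shows "b (- int n - 1) * \<bar>HH h s (- int n - 1)\<bar> + d (int n) * \<bar>HH h s (int n + 1)\<bar>
     \<le> 12 * (\<alpha> + \<beta> + \<theta>) * K4 (T + h) / real n"
proof -
  define A where "A = \<alpha> + \<beta> + \<theta>"
  have A0: "A > 0" unfolding A_def by (rule A_pos)
  have sh: "s + h \<ge> 0" using s h by simp
  define K where "K = K4 (T + h)"
  have Ks: "K4 s \<le> K" "K4 (s + h) \<le> K" unfolding K_def using s h by (auto intro: K4_mono)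
  have n0: "real n > 0" using n by simp
  have dn: "d (int n) \<le> A * (1 + real n)" using d_le2[of "int n"] unfolding A_def by simp
  have bn: "b (- int n - 1) \<le> 2 * A * (1 + real n)"
  proof -
    have "b (- int n - 1) \<le> A * (1 + \<bar>of_int (- int n - 1)\<bar>)" using b_le2 unfolding A_def by blast
    also have "\<bar>(of_int (- int n - 1) :: real)\<bar> = real n + 1" by simp
    finally have "b (- int n - 1) \<le> A * (2 + real n)" by (simp add: algebra_simps)
    also have "\<dots> \<le> A * (2 * (1 + real n))" using A0 by (intro mult_left_mono) auto
    finally show ?thesis by (simp add: algebra_simps)
  qed
  have hi1: "(1 + real n) * GG (s + h) (int n + 1) \<le> 2 * K / real n"
    using tailG_hi[OF sh n] Ks(2) n0 by (smt (verit) divide_right_mono)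
  have hi2: "(1 + real n) * GG s (int n + 1) \<le> 2 * K / real n"
    using tailG_hi[OF s(1) n] Ks(1) n0 by (smt (verit) divide_right_mono)
  have lo1: "(1 + real n) * (1 - GG (s + h) (- int n - 1)) \<le> 2 * K / real n"
    using tailG_lo[OF sh n] Ks(2) n0 by (smt (verit) divide_right_mono)
  have lo2: "(1 + real n) * (1 - GG s (- int n - 1)) \<le> 2 * K / real n"
    using tailG_lo[OF s(1) n] Ks(1) n0 by (smt (verit) divide_right_mono)
  have Hhi: "\<bar>HH h s (int n + 1)\<bar> \<le> GG (s + h) (int n + 1) + GG s (int n + 1)"
    unfolding HH_def by (rule abs_diff_nonneg_le) (use GG_01[OF sh] GG_01[OF s(1)] in auto)
  have Hlo: "\<bar>HH h s (- int n - 1)\<bar> \<le> (1 - GG (s + h) (- int n - 1)) + (1 - GG s (- int n - 1))"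
  proof -
    have "HH h s (- int n - 1) = (1 - GG s (- int n - 1)) - (1 - GG (s + h) (- int n - 1))" unfolding HH_def by simp
    then show ?thesis using abs_diff_nonneg_le[of "1 - GG s (- int n - 1)" "1 - GG (s + h) (- int n - 1)"]
      GG_01[OF sh, of "- int n - 1"] GG_01[OF s(1), of "- int n - 1"] by simp
  qed
  have t1: "d (int n) * \<bar>HH h s (int n + 1)\<bar> \<le> A * ((1 + real n) * GG (s + h) (int n + 1) + (1 + real n) * GG s (int n + 1))"
  proof -
    have "d (int n) * \<bar>HH h s (int n + 1)\<bar> \<le> (A * (1 + real n)) * (GG (s + h) (int n + 1) + GG s (int n + 1))"
      by (rule mult_mono[OF dn Hhi]) (use A0 d_pos[of "int n"] in auto)
    then show ?thesis by (simp add: algebra_simps)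
  qed
  have t2: "b (- int n - 1) * \<bar>HH h s (- int n - 1)\<bar> \<le> 2 * A * ((1 + real n) * (1 - GG (s + h) (- int n - 1)) + (1 + real n) * (1 - GG s (- int n - 1)))"
  proof -
    have "b (- int n - 1) * \<bar>HH h s (- int n - 1)\<bar> \<le> (2 * A * (1 + real n)) * ((1 - GG (s + h) (- int n - 1)) + (1 - GG s (- int n - 1)))"
      by (rule mult_mono[OF bn Hlo]) (use A0 b_pos[of "- int n - 1"] in auto)
    then show ?thesis by (simp add: algebra_simps)
  qed
  have "A * ((1 + real n) * GG (s + h) (int n + 1) + (1 + real n) * GG s (int n + 1)) \<le> A * (2 * K / real n + 2 * K / real n)"
    using hi1 hi2 A0 by (intro mult_left_mono) auto
  moreover have "2 * A * ((1 + real n) * (1 - GG (s + h) (- int n - 1)) + (1 + real n) * (1 - GG s (- int n - 1)))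
      \<le> 2 * A * (2 * K / real n + 2 * K / real n)"
    using lo1 lo2 A0 by (intro mult_left_mono) auto
  moreover have "A * (2 * K / real n + 2 * K / real n) + 2 * A * (2 * K / real n + 2 * K / real n) = 12 * A * K / real n"
    by (simp add: field_simps)
  ultimately show ?thesis using t1 t2 unfolding A_def[symmetric] K_def[symmetric] by linarith
qed

definition UU :: "real \<Rightarrow> nat \<Rightarrow> real \<Rightarrow> real \<Rightarrow> real" where
  "UU h n \<delta> s = (\<Sum>y\<in>{- int n..int n}. sqrt ((HH h s y)^2 + \<delta>^2) - \<delta>)"
definition UUp :: "real \<Rightarrow> nat \<Rightarrow> real \<Rightarrow> real \<Rightarrow> real" where
  "UUp h n \<delta> s = (\<Sum>y\<in>{- int n..int n}. (HH h s y / sqrt ((HH h s y)^2 + \<delta>^2)) * (flux (s + h) y - flux s y))"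
definition RR :: "nat \<Rightarrow> real" where "RR n = (\<Sum>y\<in>{- int n..int n}. b (y-1) + d y)"

lemma UU_der: "h \<ge> 0 \<Longrightarrow> s > 0 \<Longrightarrow> \<delta> > 0 \<Longrightarrow> (UU h n \<delta> has_real_derivative UUp h n \<delta> s) (at s)"
proof -
  assume h: "h \<ge> 0" and s: "s > 0" and \<delta>: "\<delta> > 0"
  have "((\<lambda>s. \<Sum>y\<in>{- int n..int n}. sqrt ((HH h s y)^2 + \<delta>^2) - \<delta>) has_real_derivative UUp h n \<delta> s) (at s)"
    unfolding UUp_def by (intro DERIV_sum sqrt_deriv[OF HH_der[OF h s] \<delta>])
  moreover have "(\<lambda>s. \<Sum>y\<in>{- int n..int n}. sqrt ((HH h s y)^2 + \<delta>^2) - \<delta>) = UU h n \<delta>"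
    unfolding UU_def by (rule ext) simp
  ultimately show ?thesis by simp
qed

lemma UUp_bound:
  assumes h: "h \<ge> 0" and s: "s \<ge> 0" and \<delta>: "\<delta> > 0"
  shows "UUp h n \<delta> s \<le> - \<theta> * UU h n \<delta> s
      + (b (- int n - 1) * \<bar>HH h s (- int n - 1)\<bar> + d (int n) * \<bar>HH h s (int n + 1)\<bar>) + \<delta> * RR n"
proof -
  define F where "F y = \<bar>HH h s y\<bar>" for y
  define W where "W = {- int n..int n}"
  have "UUp h n \<delta> s \<le> (\<Sum>y\<in>W. b (y-1) * F (y-1) + d y * F (y+1) - (b (y-1) + d y) * (F y - \<delta>))"
    unfolding UUp_def W_def[symmetric]
  proof (rule sum_mono)
    fix y assume "y \<in> W"
    show "(HH h s y / sqrt ((HH h s y)^2 + \<delta>^2)) * (flux (s + h) y - flux s y)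
       \<le> b (y-1) * F (y-1) + d y * F (y+1) - (b (y-1) + d y) * (F y - \<delta>)"
      unfolding flux_HH[OF h s] F_def
      by (rule sig_bound[OF \<delta>]) (use b_pos[of "y-1"] d_pos[of y] in auto)
  qed
  also have "\<dots> = (\<Sum>y\<in>W. (b (y-1) * F (y-1) - b y * F y)) + (\<Sum>y\<in>W. (d ((y+1)-1) * F (y+1) - d (y-1) * F y))
      + (\<Sum>y\<in>W. (b y - b (y-1) + d (y-1) - d y) * F y) + \<delta> * (\<Sum>y\<in>W. b (y-1) + d y)"
    by (simp add: sum.distrib[symmetric] sum_distrib_left algebra_simps)
  also have "(\<Sum>y\<in>W. (b (y-1) * F (y-1) - b y * F y)) = b (- int n - 1) * F (- int n - 1) - b (int n) * F (int n)"
    unfolding W_def using telescope_int[of "\<lambda>y. b y * F y" n] by simp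
  also have "(\<Sum>y\<in>W. (d ((y+1)-1) * F (y+1) - d (y-1) * F y)) = d (int n) * F (int n + 1) - d (- int n - 1) * F (- int n)"
    unfolding W_def using telescope_int2[of "\<lambda>y. d (y-1) * F y" n] by simp
  also have "(\<Sum>y\<in>W. (b y - b (y-1) + d (y-1) - d y) * F y) = - \<theta> * (\<Sum>y\<in>W. F y)"
    using bd_step by (simp add: sum_distrib_left)
  also have "(\<Sum>y\<in>W. b (y-1) + d y) = RR n" unfolding RR_def W_def ..
  finally have 1: "UUp h n \<delta> s \<le> b (- int n - 1) * F (- int n - 1) - b (int n) * F (int n)
      + (d (int n) * F (int n + 1) - d (- int n - 1) * F (- int n)) + - \<theta> * (\<Sum>y\<in>W. F y) + \<delta> * RR n" .
  have 2: "b (int n) * F (int n) \<ge> 0" "d (- int n - 1) * F (- int n) \<ge> 0"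
    unfolding F_def using b_pos[of "int n"] d_pos[of "- int n - 1"] by simp_all
  have 3: "UU h n \<delta> s \<le> (\<Sum>y\<in>W. F y)" unfolding UU_def W_def[symmetric] F_def
    by (rule sum_mono) (use sqrt_le_abs_plus \<delta> in \<open>smt (verit)\<close>)
  have 4: "- \<theta> * (\<Sum>y\<in>W. F y) \<le> - \<theta> * UU h n \<delta> s" using 3 tpos by simp
  show ?thesis using 1 2 4 unfolding F_def by linarith
qed

end

lemma min_ident:
  "min \<bar>(of_int z::real)\<bar> (real n) = (\<Sum>y\<in>{1..int n}. if y \<le> z then 1 else 0) + (\<Sum>y\<in>{- int n + 1..0}. if z < y then 1 else 0)"
proof (induction n)
  case 0
  then show ?case by simp
next
  case (Suc n)
  have s1: "{1..int (Suc n)} = insert (int n + 1) {1..int n}" by auto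
  have s2: "{- int (Suc n) + 1..0} = insert (- int n) {- int n + 1..0}" by auto
  have "(\<Sum>y\<in>{1..int (Suc n)}. if y \<le> z then 1 else 0) + (\<Sum>y\<in>{- int (Suc n) + 1..0}. if z < y then 1 else 0)
      = (if int n + 1 \<le> z then 1 else 0) + (if z < - int n then 1 else 0)
        + ((\<Sum>y\<in>{1..int n}. if y \<le> z then 1 else 0) + (\<Sum>y\<in>{- int n + 1..0}. if z < y then 1 else 0) :: real)"
    unfolding s1 s2 by (subst sum.insert; simp)+
  also have "\<dots> = (if int n + 1 \<le> z then 1 else 0) + (if z < - int n then 1 else 0) + min \<bar>(of_int z::real)\<bar> (real n)"
    using Suc by simp
  also have "\<dots> = min \<bar>(of_int z::real)\<bar> (real (Suc n))"
  proof (cases "int n + 1 \<le> z")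
    case True
    then have "real n + 1 \<le> of_int z" by linarith
    then show ?thesis using True by (simp add: min_def)
  next
    case F1: False
    show ?thesis
    proof (cases "z < - int n")
      case True
      then have "of_int z \<le> - real n - 1" by linarith
      then show ?thesis using True F1 by (simp add: min_def)
    next
      case False
      then have "\<bar>(of_int z::real)\<bar> \<le> real n" using F1 by linarith
      then show ?thesis using False F1 by (simp add: min_def)
    qed
  qed
  finally show ?case by simp
qed

context bdp begin

definition Dn :: "real \<Rightarrow> nat \<Rightarrow> real" where
  "Dn t n = (\<Sum>y\<in>{1..int n}. GG t y) + (\<Sum>y\<in>{- int n + 1..0}. (1 - GG t y))"

lemma Dn_eq: "t \<ge> 0 \<Longrightarrow> Dn t n = E (\<lambda>z. min \<bar>of_int z\<bar> (real n)) t"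
proof -
  assume t: "t \<ge> 0"
  define A1 where "A1 = {1..int n}"
  define A2 where "A2 = {- int n + 1..0}"
  have "E (\<lambda>z. min \<bar>of_int z\<bar> (real n)) t
      = (\<Sum>\<^sub>\<infinity>z. (\<Sum>y\<in>A1. (if y \<le> z then 1 else 0) * p t z) + (\<Sum>y\<in>A2. (if z < y then 1 else 0) * p t z))"
    unfolding E_def min_ident A1_def A2_def by (rule infsum_cong) (simp only: distrib_right sum_distrib_right)
  also have "\<dots> = (\<Sum>\<^sub>\<infinity>z. \<Sum>y\<in>A1. (if y \<le> z then 1 else 0) * p t z) + (\<Sum>\<^sub>\<infinity>z. \<Sum>y\<in>A2. (if z < y then 1 else 0) * p t z)"
    by (rule infsum_add; rule summable_on_sum_r) (auto simp: A1_def A2_def intro: GG_summ[OF t])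
  also have "(\<Sum>\<^sub>\<infinity>z. \<Sum>y\<in>A1. (if y \<le> z then 1 else 0) * p t z) = (\<Sum>y\<in>A1. GG t y)"
    unfolding GG_def E_def by (rule infsum_sum_r) (auto simp: A1_def intro: GG_summ[OF t])
  also have "(\<Sum>\<^sub>\<infinity>z. \<Sum>y\<in>A2. (if z < y then 1 else 0) * p t z) = (\<Sum>y\<in>A2. 1 - GG t y)"
    unfolding GG_compl[OF t] E_def by (rule infsum_sum_r) (auto simp: A2_def intro: GG_summ[OF t])
  finally show ?thesis unfolding Dn_def A1_def A2_def by simp
qed

lemma Dn_aa:
  assumes t: "t \<ge> 0"
  shows "Dn t n \<le> aa t" and "n \<ge> 1 \<Longrightarrow> aa t - Dn t n \<le> 2 * K4 t / real n"
proof -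
  have s1: "(\<lambda>z. \<bar>of_int z\<bar> * p t z) summable_on UNIV" by (rule summ_basic(1)[OF t])
  have s2: "(\<lambda>z. min \<bar>of_int z\<bar> (real n) * p t z) summable_on UNIV"
  proof (rule summ_w[OF t, where c=1])
    fix z
    have "\<bar>min \<bar>(of_int z::real)\<bar> (real n)\<bar> \<le> \<bar>of_int z\<bar>" by simp
    then show "\<bar>min \<bar>(of_int z::real)\<bar> (real n)\<bar> \<le> 1 * w4 z" using w4_ge(2)[of z] by simp
  qed
  have eq: "aa t - Dn t n = (\<Sum>\<^sub>\<infinity>z. (\<bar>of_int z\<bar> - min \<bar>of_int z\<bar> (real n)) * p t z)"
    unfolding Dn_eq[OF t] aa_def E_def infsum_diff_r[OF s1 s2, symmetric] by (simp add: algebra_simps)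
  have "0 \<le> (\<Sum>\<^sub>\<infinity>z. (\<bar>of_int z\<bar> - min \<bar>of_int z\<bar> (real n)) * p t z)"
    by (rule infsum_nonneg) (use pnn[OF t] in auto)
  then show "Dn t n \<le> aa t" using eq by simp
  assume n: "n \<ge> 1"
  have "(\<Sum>\<^sub>\<infinity>z. (\<bar>of_int z\<bar> - min \<bar>of_int z\<bar> (real n)) * p t z)
      \<le> (\<Sum>\<^sub>\<infinity>z. if real n \<le> \<bar>of_int z\<bar> then w3 z * p t z else 0)"
  proof (rule infsum_mono[OF summable_on_diff_r[OF s1 s2, simplified left_diff_distrib[symmetric]] tail_bound(1)[OF t n]])
    fix z
    show "(\<bar>of_int z\<bar> - min \<bar>of_int z\<bar> (real n)) * p t z \<le> (if real n \<le> \<bar>of_int z\<bar> then w3 z * p t z else 0)"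
    proof (cases "real n \<le> \<bar>of_int z\<bar>")
      case True
      have "\<bar>(of_int z::real)\<bar> ^ 1 \<le> 1 + \<bar>of_int z\<bar> ^ 3" by (rule pw_le) auto
      then have "\<bar>of_int z\<bar> - min \<bar>of_int z\<bar> (real n) \<le> w3 z" unfolding w3_def by simp
      then show ?thesis using True pnn[OF t, of z] by (auto intro: mult_right_mono)
    next
      case False then show ?thesis by simp
    qed
  qed
  also have "\<dots> \<le> 2 * K4 t / real n" by (rule tail_bound(2)[OF t n])
  finally show "aa t - Dn t n \<le> 2 * K4 t / real n" using eq by simp
qed

lemma Dn_diff: "\<bar>Dn (t + h) n - Dn t n\<bar> \<le> (\<Sum>y\<in>{- int n..int n}. \<bar>HH h t y\<bar>)"
proof -
  have "Dn (t + h) n - Dn t n = (\<Sum>y\<in>{1..int n}. HH h t y) - (\<Sum>y\<in>{- int n + 1..0}. HH h t y)"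
    unfolding Dn_def HH_def by (simp add: sum_subtractf algebra_simps)
  then have "\<bar>Dn (t + h) n - Dn t n\<bar> \<le> (\<Sum>y\<in>{1..int n}. \<bar>HH h t y\<bar>) + (\<Sum>y\<in>{- int n + 1..0}. \<bar>HH h t y\<bar>)"
    using sum_abs[of "HH h t" "{1..int n}"] sum_abs[of "HH h t" "{- int n + 1..0}"] by linarith
  also have "\<dots> = (\<Sum>y\<in>{1..int n} \<union> {- int n + 1..0}. \<bar>HH h t y\<bar>)"
    by (rule sum.union_disjoint[symmetric]) auto
  also have "\<dots> \<le> (\<Sum>y\<in>{- int n..int n}. \<bar>HH h t y\<bar>)"
    by (rule sum_mono2) auto
  finally show ?thesis .
qed

lemma init_bound:
  assumes h: "h \<ge> 0" and t: "t \<ge> 0"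
  shows "(\<Sum>y\<in>{- int n..int n}. \<bar>HH h t y\<bar>) \<le> Dn (t + h) n + Dn t n + 1"
proof -
  have th: "t + h \<ge> 0" using t h by simp
  have W: "{- int n..int n} = insert (- int n) ({- int n + 1..0} \<union> {1..int n})" by auto
  have "(\<Sum>y\<in>{- int n..int n}. \<bar>HH h t y\<bar>) = \<bar>HH h t (- int n)\<bar> + ((\<Sum>y\<in>{- int n + 1..0}. \<bar>HH h t y\<bar>) + (\<Sum>y\<in>{1..int n}. \<bar>HH h t y\<bar>))"
    unfolding W by (subst sum.insert) (auto intro!: sum.union_disjoint)
  also have "\<dots> \<le> 1 + ((\<Sum>y\<in>{- int n + 1..0}. (1 - GG (t + h) y) + (1 - GG t y)) + (\<Sum>y\<in>{1..int n}. GG (t + h) y + GG t y))"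
  proof (intro add_mono sum_mono)
    show "\<bar>HH h t (- int n)\<bar> \<le> 1" unfolding HH_def using GG_01[OF th, of "- int n"] GG_01[OF t, of "- int n"] by auto
    fix y
    show "\<bar>HH h t y\<bar> \<le> GG (t + h) y + GG t y" unfolding HH_def
      by (rule abs_diff_nonneg_le) (use GG_01[OF th] GG_01[OF t] in auto)
    have "HH h t y = (1 - GG t y) - (1 - GG (t + h) y)" unfolding HH_def by simp
    then show "\<bar>HH h t y\<bar> \<le> (1 - GG (t + h) y) + (1 - GG t y)"
      using abs_diff_nonneg_le[of "1 - GG t y" "1 - GG (t + h) y"] GG_01[OF th, of y] GG_01[OF t, of y] by simp
  qed
  also have "\<dots> = Dn (t + h) n + Dn t n + 1" unfolding Dn_def sum.distrib by linarith
  finally show ?thesis .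
qed

lemma RR_nonneg: "RR n \<ge> 0"
  unfolding RR_def using b_pos d_pos by (intro sum_nonneg) (simp add: add_nonneg_nonneg less_imp_le)

lemma contraction:
  assumes h: "h \<ge> 0" and T: "T \<ge> 1" and n: "n \<ge> 1"
  shows "(\<Sum>y\<in>{- int n..int n}. \<bar>HH h T y\<bar>)
     \<le> exp (- \<theta> * (T - 1)) * (\<Sum>y\<in>{- int n..int n}. \<bar>HH h 1 y\<bar>) + 12 * (\<alpha> + \<beta> + \<theta>) * K4 (T + h) / real n / \<theta>"
proof -
  define ErrN where "ErrN = 12 * (\<alpha> + \<beta> + \<theta>) * K4 (T + h) / real n"
  have E0: "ErrN \<ge> 0" unfolding ErrN_def using A_pos K4_pos[of "T+h"] by simp
  define ex where "ex = exp (- \<theta> * (T - 1))"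
  have ex0: "ex > 0" unfolding ex_def by simp
  define W where "W = {- int n..int n}"
  have cW: "card W = 2 * n + 1" unfolding W_def by simp
  have main: "(\<Sum>y\<in>W. \<bar>HH h T y\<bar>) \<le> ex * (\<Sum>y\<in>W. \<bar>HH h 1 y\<bar>) + ErrN / \<theta> + \<delta> * (RR n / \<theta> + real (2 * n + 1))"
    if \<delta>: "\<delta> > 0" for \<delta>
  proof -
    define c where "c = ErrN + \<delta> * RR n"
    have c0: "c \<ge> 0" unfolding c_def using E0 RR_nonneg \<delta> by simp
    have cont: "continuous_on {1..T} (UU h n \<delta>)"
    proof (rule continuous_at_imp_continuous_on, rule ballI)
      fix u assume "u \<in> {1..T}"
      then have "u > 0" by simp
      then show "isCont (UU h n \<delta>) u" by (rule DERIV_isCont[OF UU_der[OF h _ \<delta>]])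
    qed
    have U: "UU h n \<delta> T \<le> c / \<theta> + (UU h n \<delta> 1 - c / \<theta>) * ex"
      unfolding ex_def
    proof (rule ode_upper[where \<phi>'="UUp h n \<delta>", OF T _ cont])
      show "\<theta> \<noteq> 0" using tpos by simp
      fix u assume u: "1 < u" "u < T"
      show "(UU h n \<delta> has_real_derivative UUp h n \<delta> u) (at u)" using UU_der[OF h _ \<delta>] u by simp
      have "UUp h n \<delta> u \<le> - \<theta> * UU h n \<delta> u
        + (b (- int n - 1) * \<bar>HH h u (- int n - 1)\<bar> + d (int n) * \<bar>HH h u (int n + 1)\<bar>) + \<delta> * RR n"
        by (rule UUp_bound[OF h _ \<delta>]) (use u in simp)
      moreover have "b (- int n - 1) * \<bar>HH h u (- int n - 1)\<bar> + d (int n) * \<bar>HH h u (int n + 1)\<bar> \<le> ErrN"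
        unfolding ErrN_def by (rule En_bound[OF h _ _ n]) (use u in auto)
      ultimately show "UUp h n \<delta> u \<le> c - \<theta> * UU h n \<delta> u" unfolding c_def by linarith
    qed
    have U1: "UU h n \<delta> 1 \<le> (\<Sum>y\<in>W. \<bar>HH h 1 y\<bar>)" unfolding UU_def W_def
      by (rule sum_mono) (use sqrt_le_abs_plus \<delta> in \<open>smt (verit)\<close>)
    have UT: "(\<Sum>y\<in>W. \<bar>HH h T y\<bar>) \<le> UU h n \<delta> T + \<delta> * real (2 * n + 1)"
    proof -
      have "(\<Sum>y\<in>W. \<bar>HH h T y\<bar>) \<le> (\<Sum>y\<in>W. (sqrt ((HH h T y)^2 + \<delta>^2) - \<delta>) + \<delta>)"
        by (rule sum_mono) (use abs_le_sqrt_plus in simp)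
      also have "\<dots> = UU h n \<delta> T + (\<Sum>y\<in>W. \<delta>)" unfolding UU_def W_def by (rule sum.distrib)
      also have "(\<Sum>y\<in>W. \<delta>) = \<delta> * real (card W)" by simp
      finally show ?thesis unfolding cW .
    qed
    have "(UU h n \<delta> 1 - c / \<theta>) * ex \<le> UU h n \<delta> 1 * ex"
      using c0 tpos ex0 by (simp add: algebra_simps)
    also have "\<dots> \<le> (\<Sum>y\<in>W. \<bar>HH h 1 y\<bar>) * ex" by (rule mult_right_mono[OF U1]) (use ex0 in simp)
    finally have "UU h n \<delta> T \<le> c / \<theta> + (\<Sum>y\<in>W. \<bar>HH h 1 y\<bar>) * ex" using U by linarith
    moreover have "c / \<theta> = ErrN / \<theta> + \<delta> * (RR n / \<theta>)" unfolding c_def by (simp add: add_divide_distrib)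
    ultimately show ?thesis using UT by (simp add: algebra_simps)
  qed
  have "(\<Sum>y\<in>W. \<bar>HH h T y\<bar>) \<le> ex * (\<Sum>y\<in>W. \<bar>HH h 1 y\<bar>) + ErrN / \<theta>"
    by (rule drop_eps[OF main]) (use RR_nonneg tpos in auto)
  then show ?thesis unfolding ErrN_def ex_def W_def .
qed

end

lemma exp_cauchy_conv:
  fixes f :: "real \<Rightarrow> real" and c B :: real
  assumes c: "c > 0"
    and cau: "\<And>t h. t \<ge> 1 \<Longrightarrow> h \<ge> 0 \<Longrightarrow> \<bar>f (t + h) - f t\<bar> \<le> B * exp (- c * (t - 1))"
  shows "\<exists>L. (f \<longlongrightarrow> L) at_top"
proof -
  define u where "u n = f (real n + 1)" for n :: nat
  have ex_lim: "((\<lambda>t. B * exp (- c * (t - 1))) \<longlongrightarrow> 0) at_top" using c by real_asymp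
  have Bn: "\<bar>u n - u m\<bar> \<le> B * exp (- c * real m)" if "m \<le> n" for m n
  proof -
    have "\<bar>f ((real m + 1) + (real n - real m)) - f (real m + 1)\<bar> \<le> B * exp (- c * ((real m + 1) - 1))"
      by (rule cau) (use that in auto)
    moreover have eq: "(real m + 1) + (real n - real m) = real n + 1" by simp
    ultimately show ?thesis unfolding u_def by simp
  qed
  have "Cauchy u"
  proof (rule metric_CauchyI)
    fix e :: real assume e: "e > 0"
    have "((\<lambda>t. B * exp (- c * (t - 1))) \<longlongrightarrow> 0) at_top" by (rule ex_lim)
    then have "eventually (\<lambda>t. \<bar>B * exp (- c * (t - 1))\<bar> < e) at_top"
      using e unfolding tendsto_iff dist_real_def by simp
    then obtain T where T: "\<And>t. t \<ge> T \<Longrightarrow> \<bar>B * exp (- c * (t - 1))\<bar> < e"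
      unfolding eventually_at_top_linorder by blast
    define M where "M = nat \<lceil>T\<rceil>"
    have "dist (u m) (u n) < e" if "m \<ge> M" "n \<ge> M" for m n
    proof -
      have key: "\<bar>u j - u i\<bar> < e" if ij: "i \<le> j" "i \<ge> M" for i j
      proof -
        have "real i + 1 \<ge> T" using ij unfolding M_def by linarith
        then have "\<bar>B * exp (- c * ((real i + 1) - 1))\<bar> < e" by (rule T)
        then have "B * exp (- c * real i) < e" by simp
        then show ?thesis using Bn[OF ij(1)] by linarith
      qed
      show ?thesis
      proof (cases "m \<le> n")
        case True then show ?thesis using key[OF True that(1)] by (simp add: dist_real_def abs_minus_commute)
      next
        case False then show ?thesis using key[of n m] that by (simp add: dist_real_def)
      qed
    qed
    then show "\<exists>M. \<forall>m\<ge>M. \<forall>n\<ge>M. dist (u m) (u n) < e" by blast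
  qed
  then obtain L where L: "u \<longlonglongrightarrow> L" using Cauchy_convergent_iff convergent_def by blast
  have bnd: "\<bar>f t - L\<bar> \<le> B * exp (- c * (t - 1))" if t: "t \<ge> 1" for t
  proof -
    have lim2: "(\<lambda>n. \<bar>u n - f t\<bar>) \<longlonglongrightarrow> \<bar>L - f t\<bar>" by (intro tendsto_intros L)
    have "\<exists>N. \<forall>n\<ge>N. \<bar>u n - f t\<bar> \<le> B * exp (- c * (t - 1))"
    proof (intro exI allI impI)
      fix n assume n: "nat \<lceil>t\<rceil> \<le> n"
      then have "real n + 1 - t \<ge> 0" by linarith
      then have "\<bar>f (t + (real n + 1 - t)) - f t\<bar> \<le> B * exp (- c * (t - 1))" by (rule cau[OF t])
      then show "\<bar>u n - f t\<bar> \<le> B * exp (- c * (t - 1))" unfolding u_def by simp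
    qed
    then have "\<bar>L - f t\<bar> \<le> B * exp (- c * (t - 1))" by (rule LIMSEQ_le_const2[OF lim2])
    then show ?thesis by (simp add: abs_minus_commute)
  qed
  have "((\<lambda>t. f t - L) \<longlongrightarrow> 0) at_top"
  proof (rule Lim_null_comparison[OF _ ex_lim])
    show "\<forall>\<^sub>F t in at_top. norm (f t - L) \<le> B * exp (- c * (t - 1))"
      unfolding eventually_at_top_linorder using bnd by auto
  qed
  then have "((\<lambda>t. (f t - L) + L) \<longlongrightarrow> 0 + L) at_top" by (intro tendsto_add tendsto_const)
  then show ?thesis by auto
qed

context bdp begin

definition Sb :: real where "Sb = max (ss 1) (Cs / \<theta>)"

lemma aa_bound: "t \<ge> 1 \<Longrightarrow> aa t \<le> 1 + Sb"
  using aa_le_ss[of t] ss_bound[of t] unfolding Sb_def by simp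

lemma aa_cauchy:
  assumes t: "t \<ge> 1" and h: "h \<ge> 0"
  shows "\<bar>aa (t + h) - aa t\<bar> \<le> (2 * (1 + Sb) + 1) * exp (- \<theta> * (t - 1))"
proof -
  define e where "e = exp (- \<theta> * (t - 1))"
  have e0: "e > 0" unfolding e_def by simp
  define C where "C = 4 * K4 (t + h) + 12 * (\<alpha> + \<beta> + \<theta>) * K4 (t + h) / \<theta>"
  have t0: "t \<ge> 0" and th: "t + h \<ge> 0" using t h by auto
  show ?thesis
  proof (rule drop_n[where C=C])
    fix n :: nat assume n: "n \<ge> 1"
    have a1: "\<bar>aa (t + h) - Dn (t + h) n\<bar> \<le> 2 * K4 (t + h) / real n"
      using Dn_aa[OF th, of n] n by simp
    have a2: "\<bar>aa t - Dn t n\<bar> \<le> 2 * K4 (t + h) / real n"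
    proof -
      have "\<bar>aa t - Dn t n\<bar> \<le> 2 * K4 t / real n" using Dn_aa[OF t0, of n] n by simp
      also have "\<dots> \<le> 2 * K4 (t + h) / real n" using K4_mono[of t "t+h"] h n by (intro divide_right_mono) auto
      finally show ?thesis .
    qed
    have a3: "\<bar>Dn (t + h) n - Dn t n\<bar> \<le> e * (\<Sum>y\<in>{- int n..int n}. \<bar>HH h 1 y\<bar>) + 12 * (\<alpha> + \<beta> + \<theta>) * K4 (t + h) / real n / \<theta>"
      using Dn_diff[of t h n] contraction[OF h t n] unfolding e_def by linarith
    have "(\<Sum>y\<in>{- int n..int n}. \<bar>HH h 1 y\<bar>) \<le> Dn (1 + h) n + Dn 1 n + 1" by (rule init_bound[OF h]) simp
    also have "\<dots> \<le> aa (1 + h) + aa 1 + 1" using Dn_aa(1)[of "1 + h" n] Dn_aa(1)[of 1 n] h by simp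
    also have "\<dots> \<le> (1 + Sb) + (1 + Sb) + 1" using aa_bound[of "1 + h"] aa_bound[of 1] h by simp
    finally have a4: "(\<Sum>y\<in>{- int n..int n}. \<bar>HH h 1 y\<bar>) \<le> 2 * (1 + Sb) + 1" by simp
    have a5: "e * (\<Sum>y\<in>{- int n..int n}. \<bar>HH h 1 y\<bar>) \<le> e * (2 * (1 + Sb) + 1)"
      by (rule mult_left_mono[OF a4]) (use e0 in simp)
    have a6: "C / real n = 2 * K4 (t + h) / real n + 2 * K4 (t + h) / real n + 12 * (\<alpha> + \<beta> + \<theta>) * K4 (t + h) / real n / \<theta>"
      unfolding C_def using n tpos by (simp add: field_simps)
    have "\<bar>aa (t + h) - aa t\<bar> \<le> \<bar>aa (t + h) - Dn (t + h) n\<bar> + \<bar>Dn (t + h) n - Dn t n\<bar> + \<bar>aa t - Dn t n\<bar>"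
      by linarith
    then show "\<bar>aa (t + h) - aa t\<bar> \<le> (2 * (1 + Sb) + 1) * exp (- \<theta> * (t - 1)) + C / real n"
      using a1 a2 a3 a5 a6 unfolding e_def by (simp add: algebra_simps)
  qed
qed

lemma aa_conv: "\<exists>La. (aa \<longlongrightarrow> La) at_top"
  by (rule exp_cauchy_conv[OF tpos aa_cauchy])


lemma pos_part_eq: "real_of_int (pos_part y) = 0 + (1/2) * \<bar>of_int y\<bar> + (1/2) * of_int y + 0 * (of_int y)^2"
  unfolding pos_part_def by (cases "y \<ge> 0") auto
lemma neg_part_eq: "real_of_int (neg_part y) = 0 + (1/2) * \<bar>of_int y\<bar> + (- 1/2) * of_int y + 0 * (of_int y)^2"
  unfolding neg_part_def by (cases "y \<ge> 0") auto

lemma mean_pos_eq: "t \<ge> 0 \<Longrightarrow> mean_pos p t = (aa t + mm t) / 2"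
proof -
  assume t: "t \<ge> 0"
  have "mean_pos p t = E (\<lambda>y. 0 + (1/2) * \<bar>of_int y\<bar> + (1/2) * of_int y + 0 * (of_int y)^2) t"
    unfolding mean_pos_def E_def pos_part_eq ..
  also have "\<dots> = 0 + (1/2) * aa t + (1/2) * mm t + 0 * ss t" by (rule E_poly[OF t])
  finally show ?thesis by simp
qed

lemma mean_neg_eq: "t \<ge> 0 \<Longrightarrow> mean_neg p t = (aa t - mm t) / 2"
proof -
  assume t: "t \<ge> 0"
  have "mean_neg p t = E (\<lambda>y. 0 + (1/2) * \<bar>of_int y\<bar> + (- 1/2) * of_int y + 0 * (of_int y)^2) t"
    unfolding mean_neg_def E_def neg_part_eq ..
  also have "\<dots> = 0 + (1/2) * aa t + (- 1/2) * mm t + 0 * ss t" by (rule E_poly[OF t])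
  finally show ?thesis by simp
qed

lemma second_moment_eq: "second_moment p = ss"
  unfolding second_moment_def ss_def E_def by (rule ext) simp

lemma main_result:
  "\<exists>Ls Lp Lm.
           (second_moment p \<longlongrightarrow> Ls) at_top \<and>
           (mean_pos p \<longlongrightarrow> Lp) at_top \<and>
           (mean_neg p \<longlongrightarrow> Lm) at_top \<and>
           Ls = (\<alpha> + \<beta>) / (2 * \<theta>) + (\<alpha> - \<beta>)\<^sup>2 / \<theta>\<^sup>2 + (Lp + Lm) / 2 \<and>
           Ls \<ge> ((\<alpha> - \<beta>) / \<theta>)\<^sup>2 + max \<alpha> \<beta> / \<theta>"
proof -
  obtain La where La: "(aa \<longlongrightarrow> La) at_top" using aa_conv by blast
  define \<mu> where "\<mu> = (\<alpha> - \<beta>) / \<theta>"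
  have mu: "(mm \<longlongrightarrow> \<mu>) at_top" unfolding \<mu>_def by (rule mm_lim)
  define Lp where "Lp = (La + \<mu>) / 2"
  define Lm where "Lm = (La - \<mu>) / 2"
  have ev0: "eventually (\<lambda>t. t \<ge> (0::real)) at_top" by (rule eventually_ge_at_top)
  have p1: "(mean_pos p \<longlongrightarrow> Lp) at_top"
  proof (rule Lim_transform_eventually)
    show "((\<lambda>t. (aa t + mm t) / 2) \<longlongrightarrow> Lp) at_top" unfolding Lp_def by (intro tendsto_intros La mu) auto
    show "eventually (\<lambda>t. (aa t + mm t) / 2 = mean_pos p t) at_top"
      using ev0 by eventually_elim (simp add: mean_pos_eq)
  qed
  have p2: "(mean_neg p \<longlongrightarrow> Lm) at_top"
  proof (rule Lim_transform_eventually)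
    show "((\<lambda>t. (aa t - mm t) / 2) \<longlongrightarrow> Lm) at_top" unfolding Lm_def by (intro tendsto_intros La mu) auto
    show "eventually (\<lambda>t. (aa t - mm t) / 2 = mean_neg p t) at_top"
      using ev0 by eventually_elim (simp add: mean_neg_eq)
  qed
  define Lc where "Lc = \<alpha> + \<beta> + \<theta> * La + 2 * (\<alpha> - \<beta>) * \<mu>"
  define Ls where "Ls = Lc / (2 * \<theta>)"
  have p3: "(second_moment p \<longlongrightarrow> Ls) at_top"
    unfolding second_moment_eq Ls_def
  proof (rule ode_limit[where c="\<lambda>u. \<alpha> + \<beta> + \<theta> * aa u + 2 * (\<alpha> - \<beta>) * mm u"])
    show "2 * \<theta> > 0" using tpos by simp
    show "((\<lambda>u. \<alpha> + \<beta> + \<theta> * aa u + 2 * (\<alpha> - \<beta>) * mm u) \<longlongrightarrow> Lc) at_top"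
      unfolding Lc_def by (intro tendsto_intros La mu)
    fix u :: real assume "u > 0"
    then show "(ss has_real_derivative (\<alpha> + \<beta> + \<theta> * aa u + 2 * (\<alpha> - \<beta>) * mm u - 2 * \<theta> * ss u)) (at u)"
      by (rule ss_der)
  qed
  have eq: "Ls = (\<alpha> + \<beta>) / (2 * \<theta>) + (\<alpha> - \<beta>)\<^sup>2 / \<theta>\<^sup>2 + (Lp + Lm) / 2"
    unfolding Ls_def Lc_def Lp_def Lm_def \<mu>_def using tpos by (simp add: field_simps power2_eq_square)
  have Lge: "\<bar>\<mu>\<bar> \<le> La"
  proof (rule tendsto_le[OF trivial_limit_at_top_linorder La])
    show "((\<lambda>t. \<bar>mm t\<bar>) \<longlongrightarrow> \<bar>\<mu>\<bar>) at_top" by (intro tendsto_intros mu)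
    show "eventually (\<lambda>t. \<bar>mm t\<bar> \<le> aa t) at_top" using ev0 by eventually_elim (rule aa_ge_mm)
  qed
  have mx: "max \<alpha> \<beta> = (\<alpha> + \<beta> + \<bar>\<alpha> - \<beta>\<bar>) / 2" by (simp add: max_def)
  have amu: "\<bar>\<mu>\<bar> = \<bar>\<alpha> - \<beta>\<bar> / \<theta>" unfolding \<mu>_def using tpos by simp
  have "Ls = (\<alpha> + \<beta>) / (2 * \<theta>) + \<mu>^2 + La / 2"
    unfolding Ls_def Lc_def \<mu>_def using tpos by (simp add: field_simps power2_eq_square)
  moreover have "\<bar>\<alpha> - \<beta>\<bar> / (2 * \<theta>) \<le> La / 2" using Lge amu by (simp add: field_simps)
  moreover have "max \<alpha> \<beta> / \<theta> = (\<alpha> + \<beta>) / (2 * \<theta>) + \<bar>\<alpha> - \<beta>\<bar> / (2 * \<theta>)"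
    unfolding mx using tpos by (simp add: add_divide_distrib[symmetric] divide_divide_eq_left)
  ultimately have ineq: "Ls \<ge> ((\<alpha> - \<beta>) / \<theta>)\<^sup>2 + max \<alpha> \<beta> / \<theta>" unfolding \<mu>_def by linarith
  show ?thesis using p1 p2 p3 eq ineq by blast
qed

end

theorem mainTheorem4:
  fixes \<alpha> \<beta> \<theta> :: real and x :: int and p :: "real \<Rightarrow> int \<Rightarrow> real"
  assumes "\<alpha> > 0" and "\<beta> > 0" and "\<theta> > 0"
    and "bd_law \<alpha> \<beta> \<theta> x p"
  shows "\<exists>Ls Lp Lm.
           (second_moment p \<longlongrightarrow> Ls) at_top \<and>
           (mean_pos p \<longlongrightarrow> Lp) at_top \<and>
           (mean_neg p \<longlongrightarrow> Lm) at_top \<and>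
           Ls = (\<alpha> + \<beta>) / (2 * \<theta>) + (\<alpha> - \<beta>)\<^sup>2 / \<theta>\<^sup>2 + (Lp + Lm) / 2 \<and>
           Ls \<ge> ((\<alpha> - \<beta>) / \<theta>)\<^sup>2 + max \<alpha> \<beta> / \<theta>"
proof -
  interpret bdp \<alpha> \<beta> \<theta> x p by unfold_locales (use assms in auto)
  show ?thesis by (rule main_result)
qed

end
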